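(* Let $\mathcal{A}=\{H_1,\dots,H_n\}$ be an arrangement of $n$ distinct lines in $\mathbb{P}^2_{\mathbb{C}}$ and assume $|H_n\cap \operatorname{mult}(\mathcal{A})|\le 2$. Set $\mathcal{A}'=\{H_1,\dots,H_{n-1}\}$, $I=I(\mathcal{A})$, $I'=I(\mathcal{A}')$. If $\mathcal{R}(I')$ is irreducible (in the Zariski topology), then $\mathcal{R}(I)$ is also irreducible.
   Context: Each line $H_i=\{a_ix+b_iy+c_iz=0\}$ is identified with the point $(a_i:b_i:c_i)$ of the dual plane $(\mathbb{P}^2)^*$, and $\det(H_i,H_j,H_k)$ denotes the determinant of the $3\times 3$ matrix with rows $(a_i,b_i,c_i),(a_j,b_j,c_j),(a_k,b_k,c_k)$ (its vanishing is well defined and equivalent to $H_i\cap H_j\cap H_k\ne\emptyset$). The incidence of an arrangement $\mathcal{A}=\{H_1,\dots,H_n\}$ is $I(\mathcal{A})=\{\{i,j,k\}\subset\{1,\dots,n\}$ with $i,j,k$ distinct $: H_i\cap H_j\cap H_k\neq\emptyset\}$. For a set $I$ of 3-element subsets of $\{1,\dots,n\}$, the realization space is $\mathcal{R}(I)=\{(H_1,\dots,H_n)\in((\mathbb{P}^2)^* )^n : H_i\ne H_j \text{ for } i\ne j,\ \det(H_i,H_j,H_k)=0 \text{ for }\{i,j,k\}\in I,\ \det(H_i,H_j,H_k)\ne 0\text{ for }\{i,j,k\}\notin I\}$, a quasi-projective variety with its Zariski topology. For an arrangement $\mathcal{A}$, $\operatorname{mult}(\mathcal{A})$ is the set of points of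 $\mathbb{P}^2$ lying on at least three lines of $\mathcal{A}$ (multiple points). *)

theory Defs
  imports "HOL-Analysis.Analysis"
begin

(* Points of P^2 and of the dual plane (P^2)^*: 1-dimensional subspaces of C^3,
   given by a nonzero representative vector. *)
definition proj_pt :: "complex^3 \<Rightarrow> (complex^3) set" where
  "proj_pt v = {c *s v | c. True}"

definition P2 :: "(complex^3) set set" where
  "P2 = {proj_pt v | v. v \<noteq> 0}"

definition pair3 :: "complex^3 \<Rightarrow> complex^3 \<Rightarrow> complex" where
  "pair3 a p = (\<Sum>k\<in>UNIV. a $ k * p $ k)"

definition on_line :: "(complex^3) set \<Rightarrow> (complex^3) set \<Rightarrow> bool" where
  "on_line p H = (\<exists>a v. a \<noteq> 0 \<and> v \<noteq> 0 \<and> H = proj_pt a \<and> p = proj_pt v \<and> pair3 a v = 0)"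

definition det0 :: "(complex^3) set \<Rightarrow> (complex^3) set \<Rightarrow> (complex^3) set \<Rightarrow> bool" where
  "det0 L1 L2 L3 = (\<exists>v1 v2 v3. v1 \<noteq> 0 \<and> v2 \<noteq> 0 \<and> v3 \<noteq> 0 \<and>
      L1 = proj_pt v1 \<and> L2 = proj_pt v2 \<and> L3 = proj_pt v3 \<and>
      det (vector [v1, v2, v3] :: complex^3^3) = 0)"

definition mult_pts :: "nat \<Rightarrow> (nat \<Rightarrow> (complex^3) set) \<Rightarrow> (complex^3) set set" where
  "mult_pts n H = {p \<in> P2. 3 \<le> card {i \<in> {1..n}. on_line p (H i)}}"

definition incidence :: "nat \<Rightarrow> (nat \<Rightarrow> (complex^3) set) \<Rightarrow> nat set set" where
  "incidence n H = {T. \<exists>i j k. T = {i, j, k} \<and> i \<in> {1..n} \<and> j \<in> {1..n} \<and> k \<in> {1..n} \<and>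
      i \<noteq> j \<and> i \<noteq> k \<and> j \<noteq> k \<and>
      (\<exists>p \<in> P2. on_line p (H i) \<and> on_line p (H j) \<and> on_line p (H k))}"

definition Pspace :: "nat \<Rightarrow> (nat \<Rightarrow> (complex^3) set) set" where
  "Pspace n = PiE {1..n} (\<lambda>_. P2)"

definition realization :: "nat \<Rightarrow> nat set set \<Rightarrow> (nat \<Rightarrow> (complex^3) set) set" where
  "realization n I = {G \<in> Pspace n. inj_on G {1..n} \<and>
     (\<forall>i\<in>{1..n}. \<forall>j\<in>{1..n}. \<forall>k\<in>{1..n}. i \<noteq> j \<and> i \<noteq> k \<and> j \<noteq> k \<longrightarrow>
        (det0 (G i) (G j) (G k) \<longleftrightarrow> {i, j, k} \<in> I))}"

inductive_set polyfun :: "nat \<Rightarrow> ((nat \<Rightarrow> complex^3) \<Rightarrow> complex) set" for n :: nat where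
  const: "(\<lambda>x. c) \<in> polyfun n"
| coord: "i \<in> {1..n} \<Longrightarrow> (\<lambda>x. x i $ k) \<in> polyfun n"
| add: "f \<in> polyfun n \<Longrightarrow> g \<in> polyfun n \<Longrightarrow> (\<lambda>x. f x + g x) \<in> polyfun n"
| mul: "f \<in> polyfun n \<Longrightarrow> g \<in> polyfun n \<Longrightarrow> (\<lambda>x. f x * g x) \<in> polyfun n"

definition multihom :: "nat \<Rightarrow> ((nat \<Rightarrow> complex^3) \<Rightarrow> complex) \<Rightarrow> bool" where
  "multihom n f = (\<exists>d :: nat \<Rightarrow> nat. \<forall>c x. f (\<lambda>i. c i *s x i) = (\<Prod>i\<in>{1..n}. c i ^ d i) * f x)"

definition zclosed :: "nat \<Rightarrow> (nat \<Rightarrow> (complex^3) set) set \<Rightarrow> bool" where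
  "zclosed n C = (\<exists>F. (\<forall>f\<in>F. f \<in> polyfun n \<and> multihom n f) \<and>
     C = {G \<in> Pspace n. \<forall>x. (\<forall>i\<in>{1..n}. x i \<noteq> 0 \<and> G i = proj_pt (x i)) \<longrightarrow> (\<forall>f\<in>F. f x = 0)})"

definition zirreducible :: "nat \<Rightarrow> (nat \<Rightarrow> (complex^3) set) set \<Rightarrow> bool" where
  "zirreducible n S = (S \<noteq> {} \<and> (\<forall>C1 C2. zclosed n C1 \<and> zclosed n C2 \<and> S \<subseteq> C1 \<union> C2 \<longrightarrow>
      S \<subseteq> C1 \<or> S \<subseteq> C2))"

end

theory Submission
  imports Defs "HOL-Computational_Algebra.Polynomial"
begin


definition crs :: "complex^3 \<Rightarrow> complex^3 \<Rightarrow> complex^3" where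
  "crs u v = vector [u$2* v$3 - u$3* v$2, u$3* v$1 - u$1* v$3, u$1* v$2 - u$2* v$1]"

lemma crs_nth[simp]:
  "crs u v $ 1 = u$2* v$3 - u$3* v$2" "crs u v $ 2 = u$3* v$1 - u$1* v$3" "crs u v $ 3 = u$1* v$2 - u$2* v$1"
  by (simp_all add: crs_def)

lemma pair3_exp: "pair3 a p = a$1* p$1 + a$2* p$2 + a$3* p$3"
  by (simp add: pair3_def sum_3)

lemma vec3_eq: "(u::complex^3) = v \<longleftrightarrow> u$1 = v$1 \<and> u$2 = v$2 \<and> u$3 = v$3"
  by (simp add: vec_eq_iff forall_3)

lemma vec3_0: "(u::complex^3) = 0 \<longleftrightarrow> u$1 = 0 \<and> u$2 = 0 \<and> u$3 = 0"
  by (simp add: vec3_eq)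

lemma pair3_comm: "pair3 a b = pair3 b a" by (simp add: pair3_exp algebra_simps)
lemma pair3_scale1[simp]: "pair3 (c *s a) b = c * pair3 a b" by (simp add: pair3_exp algebra_simps)
lemma pair3_scale2[simp]: "pair3 a (c *s b) = c * pair3 a b" by (simp add: pair3_exp algebra_simps)
lemma pair3_add2: "pair3 a (b + d) = pair3 a b + pair3 a d" by (simp add: pair3_exp algebra_simps)
lemma pair3_zero[simp]: "pair3 a 0 = 0" "pair3 0 a = 0" by (simp_all add: pair3_exp)

lemma crs_scale1[simp]: "crs (c *s u) v = c *s crs u v" by (simp add: vec3_eq algebra_simps)
lemma crs_scale2[simp]: "crs u (c *s v) = c *s crs u v" by (simp add: vec3_eq algebra_simps)
lemma crs_add2: "crs u (v + w) = crs u v + crs u w" by (simp add: vec3_eq algebra_simps)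
lemma crs_self[simp]: "crs u u = 0" by (simp add: vec3_eq algebra_simps)
lemma crs_anti: "crs u v = - crs v u" by (simp add: vec3_eq algebra_simps)
lemma crs_zero[simp]: "crs u 0 = 0" "crs 0 u = 0" by (simp_all add: vec3_eq)
lemma pair3_crs1[simp]: "pair3 (crs u v) u = 0" by (simp add: pair3_exp algebra_simps)
lemma pair3_crs2[simp]: "pair3 (crs u v) v = 0" by (simp add: pair3_exp algebra_simps)
lemma pair3_crs1'[simp]: "pair3 u (crs u v) = 0" by (simp add: pair3_exp algebra_simps)
lemma pair3_crs2'[simp]: "pair3 v (crs u v) = 0" by (simp add: pair3_exp algebra_simps)
lemma triple_rot: "pair3 (crs u v) w = pair3 (crs v w) u" by (simp add: pair3_exp algebra_simps)
lemma triple_swap: "pair3 (crs u v) w = - pair3 (crs v u) w" by (simp add: pair3_exp algebra_simps)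
lemma triple_assoc: "pair3 a (crs b c) = pair3 (crs a b) c" by (simp add: pair3_exp algebra_simps)
lemma crs_crs: "crs (crs u v) z = pair3 u z *s v - pair3 v z *s u"
  by (simp add: vec3_eq pair3_exp algebra_simps)
lemma crs_crs2: "crs a (crs u v) = pair3 a v *s u - pair3 a u *s v"
  by (simp add: vec3_eq pair3_exp algebra_simps)

lemma crs_zero_prop:
  assumes "A \<noteq> 0" "crs A z = 0" shows "\<exists>c. z = c *s A"
proof -
  have e: "A$2*z$3 = A$3*z$2" "A$3*z$1 = A$1*z$3" "A$1*z$2 = A$2*z$1"
    using assms(2) by (simp_all add: vec3_eq)
  consider "A$1 \<noteq> 0" | "A$2 \<noteq> 0" | "A$3 \<noteq> 0" using assms(1) by (auto simp: vec3_0)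
  then show ?thesis
  proof cases
    case 1 show ?thesis
      by (rule exI[of _ "z$1 / A$1"]) (use 1 e in \<open>simp add: vec3_eq field_simps\<close>)
  next
    case 2 show ?thesis
      by (rule exI[of _ "z$2 / A$2"]) (use 2 e in \<open>simp add: vec3_eq field_simps\<close>)
  next
    case 3 show ?thesis
      by (rule exI[of _ "z$3 / A$3"]) (use 3 e in \<open>simp add: vec3_eq field_simps\<close>)
  qed
qed

lemma indep2:
  assumes "crs u v \<noteq> 0" "a *s u + b *s v = 0" shows "a = 0 \<and> b = 0"
proof -
  have "crs u (a *s u + b *s v) = 0" using assms by simp
  hence "b *s crs u v = 0" by (simp add: crs_add2)
  hence b: "b = 0" using assms(1) by (simp add: vec3_0) (metis mult_eq_0_iff)
  have "u \<noteq> 0" using assms(1) by auto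
  with assms b have "a = 0" by (simp add: vec3_0) blast
  with b show ?thesis by simp
qed

lemma crs_zero_iff_prop:
  assumes "u \<noteq> 0" shows "crs u v = 0 \<longleftrightarrow> (\<exists>c. v = c *s u)"
  using crs_zero_prop[OF assms] by auto

lemma det_vec: "det (vector [u, v, w] :: complex^3^3) = pair3 (crs u v) w"
  by (simp add: det_3 pair3_exp algebra_simps)

lemma exists_orth: "\<exists>v. v \<noteq> 0 \<and> pair3 a v = 0"
proof (cases "a$1 = 0")
  case True thus ?thesis
    by (intro exI[of _ "vector[1,0,0]"]) (simp add: vec3_0 pair3_exp)
next
  case False thus ?thesis
    by (intro exI[of _ "vector[-a$2,a$1,0]"]) (simp add: vec3_0 pair3_exp algebra_simps)
qed

lemma exists_orth2: "\<exists>v. v \<noteq> 0 \<and> pair3 a v = 0 \<and> pair3 b v = 0"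
proof (cases "crs a b = 0")
  case False thus ?thesis
    by (intro exI[of _ "crs a b"]) simp
next
  case True
  show ?thesis
  proof (cases "a = 0")
    case True thus ?thesis using exists_orth[of b] by auto
  next
    case False
    then obtain c where "b = c *s a" using crs_zero_prop[OF False] True by blast
    thus ?thesis using exists_orth[of a] by auto
  qed
qed



definition rep :: "nat \<Rightarrow> (nat \<Rightarrow> (complex^3) set) \<Rightarrow> (nat \<Rightarrow> complex^3) \<Rightarrow> bool" where
  "rep N G x \<longleftrightarrow> (\<forall>i\<in>{1..N}. x i \<noteq> 0 \<and> G i = proj_pt (x i))"

lemma proj_pt_self: "v \<in> proj_pt v"
  unfolding proj_pt_def by (auto intro: exI[of _ 1])

lemma proj_pt_scale: "c \<noteq> 0 \<Longrightarrow> proj_pt (c *s u) = proj_pt u"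
proof -
  assume c: "c \<noteq> 0"
  have "\<exists>e. d *s (c *s u) = e *s u" for d by (rule exI[of _ "d * c"]) (simp add: vector_smult_assoc)
  moreover have "\<exists>e. d *s u = e *s (c *s u)" for d
    by (rule exI[of _ "d / c"]) (simp add: vector_smult_assoc c)
  ultimately show ?thesis unfolding proj_pt_def by blast
qed

lemma proj_eq_scale:
  assumes "u \<noteq> 0" "v \<noteq> 0" "proj_pt u = proj_pt v" shows "\<exists>c. c \<noteq> 0 \<and> v = c *s u"
proof -
  have "v \<in> proj_pt u" using assms proj_pt_self by metis
  then obtain c where "v = c *s u" unfolding proj_pt_def by auto
  with assms show ?thesis by (intro exI[of _ c]) auto
qed

lemma proj_eq_iff:
  assumes "u \<noteq> 0" "v \<noteq> 0" shows "proj_pt u = proj_pt v \<longleftrightarrow> crs u v = 0"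
proof
  assume "proj_pt u = proj_pt v"
  then obtain c where "v = c *s u" using proj_eq_scale assms by blast
  thus "crs u v = 0" by simp
next
  assume "crs u v = 0"
  then obtain c where c: "v = c *s u" using crs_zero_prop assms by blast
  with assms have "c \<noteq> 0" by auto
  with c show "proj_pt u = proj_pt v" by (simp add: proj_pt_scale)
qed

lemma P2_iff: "L \<in> P2 \<longleftrightarrow> (\<exists>v. v \<noteq> 0 \<and> L = proj_pt v)"
  unfolding P2_def by auto

lemma rep_exists:
  assumes "G \<in> Pspace N" shows "\<exists>x. rep N G x"
proof -
  have "\<forall>i\<in>{1..N}. \<exists>v. v \<noteq> 0 \<and> G i = proj_pt v"
    using assms unfolding Pspace_def by (auto simp: PiE_iff P2_iff)
  then obtain x where "\<forall>i\<in>{1..N}. x i \<noteq> 0 \<and> G i = proj_pt (x i)" by metis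
  thus ?thesis unfolding rep_def by blast
qed

lemma rep_rel:
  assumes "rep N G x" "rep N G y" shows "\<exists>c. \<forall>i\<in>{1..N}. c i \<noteq> 0 \<and> y i = c i *s x i"
proof -
  have "\<forall>i\<in>{1..N}. \<exists>c. c \<noteq> 0 \<and> y i = c *s x i"
    using assms unfolding rep_def by (metis proj_eq_scale)
  thus ?thesis by metis
qed

lemma rep_scale:
  assumes "rep N G x" "\<forall>i\<in>{1..N}. c i \<noteq> 0" shows "rep N G (\<lambda>i. c i *s x i)"
  using assms unfolding rep_def by (auto simp: proj_pt_scale)

lemma on_line_iff:
  assumes "a \<noteq> 0" "v \<noteq> 0" shows "on_line (proj_pt v) (proj_pt a) \<longleftrightarrow> pair3 a v = 0"
proof
  assume "on_line (proj_pt v) (proj_pt a)"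
  then obtain a' v' where h: "a' \<noteq> 0" "v' \<noteq> 0" "proj_pt a = proj_pt a'" "proj_pt v = proj_pt v'" "pair3 a' v' = 0"
    unfolding on_line_def by metis
  obtain c where c: "c \<noteq> 0" "a' = c *s a" using proj_eq_scale h assms by metis
  obtain d where d: "d \<noteq> 0" "v' = d *s v" using proj_eq_scale h assms by metis
  show "pair3 a v = 0" using h c d by simp
next
  assume "pair3 a v = 0" thus "on_line (proj_pt v) (proj_pt a)"
    unfolding on_line_def using assms by blast
qed

lemma det0_iff:
  assumes "a \<noteq> 0" "b \<noteq> 0" "c \<noteq> 0"
  shows "det0 (proj_pt a) (proj_pt b) (proj_pt c) \<longleftrightarrow> pair3 (crs a b) c = 0"
proof
  assume "det0 (proj_pt a) (proj_pt b) (proj_pt c)"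
  then obtain a' b' c' where h: "a' \<noteq> 0" "b' \<noteq> 0" "c' \<noteq> 0" "proj_pt a = proj_pt a'"
     "proj_pt b = proj_pt b'" "proj_pt c = proj_pt c'" "pair3 (crs a' b') c' = 0"
    unfolding det0_def det_vec by metis
  obtain x where x: "x \<noteq> 0" "a' = x *s a" using proj_eq_scale h assms by metis
  obtain y where y: "y \<noteq> 0" "b' = y *s b" using proj_eq_scale h assms by metis
  obtain z where z: "z \<noteq> 0" "c' = z *s c" using proj_eq_scale h assms by metis
  show "pair3 (crs a b) c = 0" using h x y z by simp
next
  assume "pair3 (crs a b) c = 0" thus "det0 (proj_pt a) (proj_pt b) (proj_pt c)"
    unfolding det0_def det_vec using assms by blast
qed

lemma orth_crs:
  assumes "crs a b \<noteq> 0" "pair3 a v = 0" "pair3 b v = 0" shows "\<exists>c. v = c *s crs a b"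
proof -
  have "crs (crs a b) v = 0" using assms by (simp add: crs_crs)
  thus ?thesis using crs_zero_prop assms(1) by blast
qed

lemma conc_iff:
  assumes "a \<noteq> 0" "b \<noteq> 0" "c \<noteq> 0"
  shows "(\<exists>p\<in>P2. on_line p (proj_pt a) \<and> on_line p (proj_pt b) \<and> on_line p (proj_pt c))
     \<longleftrightarrow> pair3 (crs a b) c = 0"
proof
  assume "\<exists>p\<in>P2. on_line p (proj_pt a) \<and> on_line p (proj_pt b) \<and> on_line p (proj_pt c)"
  then obtain p where p: "p \<in> P2" "on_line p (proj_pt a)" "on_line p (proj_pt b)" "on_line p (proj_pt c)"
    by blast
  then obtain v where v: "v \<noteq> 0" "p = proj_pt v" unfolding P2_iff by blast
  have o: "pair3 a v = 0" "pair3 b v = 0" "pair3 c v = 0"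
    using on_line_iff[OF assms(1) v(1)] on_line_iff[OF assms(2) v(1)] on_line_iff[OF assms(3) v(1)] p v
    by auto
  show "pair3 (crs a b) c = 0"
  proof (cases "crs a b = 0")
    case False
    then obtain k where k: "v = k *s crs a b" using orth_crs o by blast
    with v have "k \<noteq> 0" by auto
    have "pair3 c (k *s crs a b) = 0" using o(3) k by simp
    hence "k * pair3 c (crs a b) = 0" by simp
    with \<open>k \<noteq> 0\<close> have "pair3 c (crs a b) = 0" by simp
    thus ?thesis by (simp add: pair3_comm[of c])
  qed simp
next
  assume h: "pair3 (crs a b) c = 0"
  have "\<exists>v. v \<noteq> 0 \<and> pair3 a v = 0 \<and> pair3 b v = 0 \<and> pair3 c v = 0"
  proof (cases "crs a b = 0")
    case False
    have "pair3 c (crs a b) = 0" using h by (simp add: pair3_comm[of c])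
    thus ?thesis using False by (intro exI[of _ "crs a b"]) simp
  next
    case True
    then obtain k where k: "b = k *s a" using crs_zero_prop assms(1) by blast
    obtain v where "v \<noteq> 0" "pair3 a v = 0" "pair3 c v = 0" using exists_orth2[of a c] by blast
    thus ?thesis using k by (intro exI[of _ v]) simp
  qed
  then obtain v where v: "v \<noteq> 0" "pair3 a v = 0" "pair3 b v = 0" "pair3 c v = 0" by blast
  have "proj_pt v \<in> P2" using v(1) unfolding P2_iff by blast
  moreover have "on_line (proj_pt v) (proj_pt a)" "on_line (proj_pt v) (proj_pt b)" "on_line (proj_pt v) (proj_pt c)"
    using on_line_iff[OF assms(1) v(1)] on_line_iff[OF assms(2) v(1)] on_line_iff[OF assms(3) v(1)] v by auto
  ultimately show "\<exists>p\<in>P2. on_line p (proj_pt a) \<and> on_line p (proj_pt b) \<and> on_line p (proj_pt c)"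
    by blast
qed

lemma polyfun_local:
  assumes "f \<in> polyfun N" "\<forall>i\<in>{1..N}. x i = y i" shows "f x = f y"
  using assms(1) by induction (use assms(2) in auto)

lemma polyfun_sub: "f \<in> polyfun N \<Longrightarrow> g \<in> polyfun N \<Longrightarrow> (\<lambda>x. f x - g x) \<in> polyfun N"
proof -
  assume "f \<in> polyfun N" "g \<in> polyfun N"
  hence "(\<lambda>x. f x + (\<lambda>x. -1) x * g x) \<in> polyfun N"
    by (intro polyfun.add polyfun.mul polyfun.const)
  thus ?thesis by simp
qed

lemma polyfun_subst:
  assumes "f \<in> polyfun N" "\<forall>i\<in>{1..N}. \<forall>k. (\<lambda>x. \<phi> x i $ k) \<in> polyfun M"
  shows "(\<lambda>x. f (\<phi> x)) \<in> polyfun M"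
  using assms(1)
proof induction
  case (const c) show ?case by (rule polyfun.const)
next
  case (coord i k) thus ?case using assms(2) by auto
next
  case (add f g) thus ?case using polyfun.add by fastforce
next
  case (mul f g) thus ?case using polyfun.mul by fastforce
qed

lemma multihom_scale_one:
  assumes "multihom N f" "n \<in> {1..N}"
  shows "\<exists>d. \<forall>x c v. f (x(n := c *s v)) = c ^ d * f (x(n := v))"
proof -
  obtain d where d: "\<forall>c x. f (\<lambda>i. c i *s x i) = (\<Prod>i\<in>{1..N}. c i ^ d i) * f x"
    using assms unfolding multihom_def by blast
  have "f (x(n := c *s v)) = c ^ d n * f (x(n := v))" for x c v
  proof -
    have e: "x(n := c *s v) = (\<lambda>i. (if i = n then c else 1) *s (x(n := v)) i)"
      by (auto simp: fun_eq_iff)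
    have p: "(\<Prod>i\<in>{1..N}. (if i = n then c else 1) ^ d i) = c ^ d n"
    proof -
      have "(\<Prod>i\<in>{1..N}. (if i = n then c else 1) ^ d i) = (\<Prod>i\<in>{1..N}. if i = n then c ^ d n else 1)"
        by (rule prod.cong) auto
      also have "\<dots> = c ^ d n" using assms(2) by (simp add: prod.delta)
      finally show ?thesis .
    qed
    show ?thesis using d e p by metis
  qed
  thus ?thesis by blast
qed

lemma rep_indep:
  assumes "f \<in> polyfun N" "multihom N f" "rep N G x" "rep N G y"
  shows "f x = 0 \<longleftrightarrow> f y = 0"
proof -
  obtain c where c: "\<forall>i\<in>{1..N}. c i \<noteq> 0 \<and> y i = c i *s x i" using rep_rel assms by blast
  obtain d where d: "\<forall>c x. f (\<lambda>i. c i *s x i) = (\<Prod>i\<in>{1..N}. c i ^ d i) * f x"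
    using assms unfolding multihom_def by blast
  have "f y = f (\<lambda>i. c i *s x i)" using polyfun_local[OF assms(1)] c by auto
  also have "\<dots> = (\<Prod>i\<in>{1..N}. c i ^ d i) * f x" using d by blast
  finally have "f y = (\<Prod>i\<in>{1..N}. c i ^ d i) * f x" .
  moreover have "(\<Prod>i\<in>{1..N}. c i ^ d i) \<noteq> 0" using c by (simp add: prod_zero_iff)
  ultimately show ?thesis by (metis mult_eq_0_iff)
qed

definition Zset :: "nat \<Rightarrow> ((nat \<Rightarrow> complex^3) \<Rightarrow> complex) set \<Rightarrow> (nat \<Rightarrow> (complex^3) set) set" where
  "Zset N F = {G \<in> Pspace N. \<forall>x. rep N G x \<longrightarrow> (\<forall>f\<in>F. f x = 0)}"

definition good :: "nat \<Rightarrow> ((nat \<Rightarrow> complex^3) \<Rightarrow> complex) set \<Rightarrow> bool" where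
  "good N F \<longleftrightarrow> (\<forall>f\<in>F. f \<in> polyfun N \<and> multihom N f)"

lemma zclosed_iff: "zclosed N C \<longleftrightarrow> (\<exists>F. good N F \<and> C = Zset N F)"
  unfolding zclosed_def Zset_def good_def rep_def by blast

lemma Zset_mem:
  assumes "good N F" "rep N G x" "G \<in> Pspace N"
  shows "G \<in> Zset N F \<longleftrightarrow> (\<forall>f\<in>F. f x = 0)"
  using assms rep_indep unfolding Zset_def good_def by blast

lemma multihom_mult:
  assumes "multihom N f" "multihom N g" shows "multihom N (\<lambda>x. f x * g x)"
proof -
  obtain d where d: "\<forall>c x. f (\<lambda>i. c i *s x i) = (\<Prod>i\<in>{1..N}. c i ^ d i) * f x"
    using assms unfolding multihom_def by blast
  obtain e where e: "\<forall>c x. g (\<lambda>i. c i *s x i) = (\<Prod>i\<in>{1..N}. c i ^ e i) * g x"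
    using assms unfolding multihom_def by blast
  have "(\<Prod>i\<in>{1..N}. c i ^ (d i + e i)) = (\<Prod>i\<in>{1..N}. c i ^ d i) * (\<Prod>i\<in>{1..N}. c i ^ e i)" for c :: "nat \<Rightarrow> complex"
    by (simp add: power_add prod.distrib)
  thus ?thesis unfolding multihom_def using d e
    by (intro exI[of _ "\<lambda>i. d i + e i"]) (simp add: algebra_simps)
qed

lemma zclosed_Un:
  assumes "zclosed N C1" "zclosed N C2" shows "zclosed N (C1 \<union> C2)"
proof -
  obtain F1 where F1: "good N F1" "C1 = Zset N F1" using assms zclosed_iff by blast
  obtain F2 where F2: "good N F2" "C2 = Zset N F2" using assms zclosed_iff by blast
  define F where "F = {(\<lambda>x. f x * g x) | f g. f \<in> F1 \<and> g \<in> F2}"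
  have gF: "good N F" using F1 F2 unfolding F_def good_def
    by (auto intro: polyfun.mul multihom_mult)
  have "C1 \<union> C2 = Zset N F"
  proof (intro set_eqI iffI)
    fix G assume "G \<in> C1 \<union> C2"
    thus "G \<in> Zset N F" using F1 F2 unfolding Zset_def F_def by auto
  next
    fix G assume G: "G \<in> Zset N F"
    hence P: "G \<in> Pspace N" unfolding Zset_def by auto
    obtain x where x: "rep N G x" using rep_exists P by blast
    have "\<forall>f\<in>F. f x = 0" using Zset_mem[OF gF x P] G by blast
    moreover have "(\<lambda>x. f x * g x) \<in> F" if "f \<in> F1" "g \<in> F2" for f g
      unfolding F_def using that by blast
    ultimately have "\<forall>f\<in>F1. \<forall>g\<in>F2. f x * g x = 0" by fastforce
    hence "(\<forall>f\<in>F1. f x = 0) \<or> (\<forall>g\<in>F2. g x = 0)" by auto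
    thus "G \<in> C1 \<union> C2" using Zset_mem[OF F1(1) x P] Zset_mem[OF F2(1) x P] F1 F2 by blast
  qed
  thus ?thesis using gF zclosed_iff by blast
qed

lemma zclosed_empty: "zclosed N {}"
proof -
  have g: "good N {\<lambda>x. 1}" unfolding good_def multihom_def
    by (auto intro: polyfun.const exI[of _ "\<lambda>i. 0"])
  have "Zset N {\<lambda>x. 1} = {}"
  proof (rule ccontr)
    assume "Zset N {\<lambda>x. 1} \<noteq> {}"
    then obtain G where G: "G \<in> Zset N {\<lambda>x. 1}" by blast
    hence "G \<in> Pspace N" unfolding Zset_def by blast
    then obtain x where x: "rep N G x" using rep_exists by blast
    with G show False unfolding Zset_def by auto
  qed
  thus ?thesis unfolding zclosed_iff using g by (intro exI[of _ "{\<lambda>x. 1}"]) simp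
qed

lemma zclosed_Union:
  assumes "finite A" "\<forall>C\<in>A. zclosed N C" shows "zclosed N (\<Union>A)"
  using assms by (induction A rule: finite_induct) (auto intro: zclosed_Un zclosed_empty)

lemma zirred_open:
  assumes "zirreducible N Y0" "zclosed N Z" "Y = Y0 - Z" "Y \<noteq> {}"
  shows "zirreducible N Y"
proof -
  have irr: "\<And>C1 C2. zclosed N C1 \<Longrightarrow> zclosed N C2 \<Longrightarrow> Y0 \<subseteq> C1 \<union> C2 \<Longrightarrow> Y0 \<subseteq> C1 \<or> Y0 \<subseteq> C2"
    using assms(1) unfolding zirreducible_def by blast
  have "Y \<subseteq> C1 \<or> Y \<subseteq> C2" if h: "zclosed N C1" "zclosed N C2" "Y \<subseteq> C1 \<union> C2" for C1 C2
  proof -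
    have "Y0 \<subseteq> (C1 \<union> Z) \<union> C2" using h assms(3) by auto
    moreover have "zclosed N (C1 \<union> Z)" using h assms(2) zclosed_Un by blast
    ultimately have "Y0 \<subseteq> C1 \<union> Z \<or> Y0 \<subseteq> C2" using irr h(2) by blast
    moreover have "Y0 \<subseteq> C1 \<union> Z \<Longrightarrow> Y0 \<subseteq> C1 \<or> Y0 \<subseteq> Z" using irr h(1) assms(2) by blast
    moreover have "\<not> Y0 \<subseteq> Z" using assms(3,4) by auto
    ultimately show "Y \<subseteq> C1 \<or> Y \<subseteq> C2" using assms(3) by auto
  qed
  thus ?thesis using assms(4) unfolding zirreducible_def by blast
qed



definition pv :: "nat \<Rightarrow> ((nat \<Rightarrow> complex^3) \<Rightarrow> complex^3) \<Rightarrow> bool" where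
  "pv M q \<longleftrightarrow> (\<forall>k. (\<lambda>x. q x $ k) \<in> polyfun M)"

definition mhv :: "nat \<Rightarrow> ((nat \<Rightarrow> complex^3) \<Rightarrow> complex^3) \<Rightarrow> bool" where
  "mhv M q \<longleftrightarrow> (\<exists>e. \<forall>c x. q (\<lambda>i. c i *s x i) = (\<Prod>i\<in>{1..M}. c i ^ e i) *s q x)"

lemma pv_const: "pv M (\<lambda>x. h)" unfolding pv_def by (auto intro: polyfun.const)
lemma mhv_const: "mhv M (\<lambda>x. h)" unfolding mhv_def by (auto intro: exI[of _ "\<lambda>i. 0"])
lemma pv_coord: "a \<in> {1..M} \<Longrightarrow> pv M (\<lambda>x. x a)" unfolding pv_def by (auto intro: polyfun.coord)
lemma mhv_coord:
  assumes "a \<in> {1..M}" shows "mhv M (\<lambda>x. x a)"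
proof -
  have "(\<Prod>i\<in>{1..M}. c i ^ (if i = a then 1 else 0)) = c a" for c :: "nat \<Rightarrow> complex"
  proof -
    have "(\<Prod>i\<in>{1..M}. c i ^ (if i = a then 1 else 0)) = (\<Prod>i\<in>{1..M}. if i = a then c a else 1)"
      by (rule prod.cong) auto
    also have "\<dots> = c a" using assms by (simp add: prod.delta)
    finally show ?thesis .
  qed
  thus ?thesis unfolding mhv_def by (intro exI[of _ "\<lambda>i. if i = a then 1 else 0"]) simp
qed

lemma pv_crs: "pv M p \<Longrightarrow> pv M q \<Longrightarrow> pv M (\<lambda>x. crs (p x) (q x))"
  unfolding pv_def
proof (intro allI)
  fix k :: 3
  assume p: "\<forall>k. (\<lambda>x. p x $ k) \<in> polyfun M" and q: "\<forall>k. (\<lambda>x. q x $ k) \<in> polyfun M"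
  have m: "\<And>a b. (\<lambda>x. p x $ a * q x $ b) \<in> polyfun M" using p q by (auto intro: polyfun.mul)
  have s: "\<And>a b c d. (\<lambda>x. p x $ a * q x $ b - p x $ c * q x $ d) \<in> polyfun M"
    using m by (rule polyfun_sub) (use m in auto)
  show "(\<lambda>x. crs (p x) (q x) $ k) \<in> polyfun M"
    using exhaust_3[of k] s by auto
qed

lemma mhv_crs:
  assumes "mhv M p" "mhv M q" shows "mhv M (\<lambda>x. crs (p x) (q x))"
proof -
  obtain d where d: "\<forall>c x. p (\<lambda>i. c i *s x i) = (\<Prod>i\<in>{1..M}. c i ^ d i) *s p x"
    using assms unfolding mhv_def by blast
  obtain e where e: "\<forall>c x. q (\<lambda>i. c i *s x i) = (\<Prod>i\<in>{1..M}. c i ^ e i) *s q x"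
    using assms unfolding mhv_def by blast
  have pr: "(\<Prod>i\<in>{1..M}. c i ^ (d i + e i)) = (\<Prod>i\<in>{1..M}. c i ^ d i) * (\<Prod>i\<in>{1..M}. c i ^ e i)" for c :: "nat \<Rightarrow> complex"
    by (simp add: power_add prod.distrib)
  show ?thesis unfolding mhv_def
  proof (intro exI allI)
    fix c x
    have "crs (p (\<lambda>i. c i *s x i)) (q (\<lambda>i. c i *s x i))
       = (\<Prod>i\<in>{1..M}. c i ^ d i) *s ((\<Prod>i\<in>{1..M}. c i ^ e i) *s crs (p x) (q x))"
      by (simp add: d e)
    also have "\<dots> = (\<Prod>i\<in>{1..M}. c i ^ (d i + e i)) *s crs (p x) (q x)"
      by (simp only: vector_smult_assoc pr)
    finally show "crs (p (\<lambda>i. c i *s x i)) (q (\<lambda>i. c i *s x i)) = (\<Prod>i\<in>{1..M}. c i ^ (d i + e i)) *s crs (p x) (q x)" .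
  qed
qed

lemma subst_polyfun:
  assumes "1 \<le> n" "f \<in> polyfun n" "pv (n - 1) q"
  shows "(\<lambda>x. f (x(n := q x))) \<in> polyfun (n - 1)"
proof (rule polyfun_subst[OF assms(2)], intro ballI allI)
  fix i k assume i: "i \<in> {1..n}"
  show "(\<lambda>x. (x(n := q x)) i $ k) \<in> polyfun (n - 1)"
  proof (cases "i = n")
    case True thus ?thesis using assms(3) unfolding pv_def by simp
  next
    case False
    hence "i \<in> {1..n-1}" using i by auto
    thus ?thesis using False by (simp add: polyfun.coord)
  qed
qed

lemma subst_multihom:
  assumes "1 \<le> n" "multihom n f" "mhv (n - 1) q"
  shows "multihom (n - 1) (\<lambda>x. f (x(n := q x)))"
proof -
  obtain d where d: "\<forall>c x. f (\<lambda>i. c i *s x i) = (\<Prod>i\<in>{1..n}. c i ^ d i) * f x"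
    using assms unfolding multihom_def by blast
  obtain e where e: "\<forall>c x. q (\<lambda>i. c i *s x i) = (\<Prod>i\<in>{1..n-1}. c i ^ e i) *s q x"
    using assms unfolding mhv_def by blast
  have U: "{1..n} = insert n {1..n-1}" using assms(1) by auto
  have "f ((\<lambda>i. c i *s x i)(n := q (\<lambda>i. c i *s x i))) = (\<Prod>i\<in>{1..n-1}. c i ^ (d i + e i * d n)) * f (x(n := q x))"
    for c x
  proof -
    define c' where "c' = c(n := \<Prod>i\<in>{1..n-1}. c i ^ e i)"
    have "(\<lambda>i. c i *s x i)(n := q (\<lambda>i. c i *s x i)) = (\<lambda>i. c' i *s (x(n := q x)) i)"
      unfolding c'_def by (auto simp: fun_eq_iff e)
    hence "f ((\<lambda>i. c i *s x i)(n := q (\<lambda>i. c i *s x i))) = (\<Prod>i\<in>{1..n}. c' i ^ d i) * f (x(n := q x))"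
      using d by metis
    also have "(\<Prod>i\<in>{1..n}. c' i ^ d i) = c' n ^ d n * (\<Prod>i\<in>{1..n-1}. c' i ^ d i)"
      unfolding U by (subst prod.insert) auto
    also have "(\<Prod>i\<in>{1..n-1}. c' i ^ d i) = (\<Prod>i\<in>{1..n-1}. c i ^ d i)"
      unfolding c'_def by (rule prod.cong) auto
    also have "c' n ^ d n = (\<Prod>i\<in>{1..n-1}. c i ^ (e i * d n))"
      unfolding c'_def by (simp add: prod_power_distrib power_mult)
    also have "(\<Prod>i\<in>{1..n-1}. c i ^ (e i * d n)) * (\<Prod>i\<in>{1..n-1}. c i ^ d i)
       = (\<Prod>i\<in>{1..n-1}. c i ^ (d i + e i * d n))"
      by (simp add: power_add prod.distrib mult.commute)
    finally show ?thesis .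
  qed
  thus ?thesis unfolding multihom_def by (intro exI[of _ "\<lambda>i. d i + e i * d n"]) auto
qed

lemma polyfun_line:
  assumes "f \<in> polyfun N"
  shows "\<exists>p. \<forall>s. f (x(n := s *s u + v)) = poly p s"
  using assms
proof induction
  case (const c) show ?case by (rule exI[of _ "[:c:]"]) simp
next
  case (coord i k)
  show ?case
  proof (cases "i = n")
    case True thus ?thesis by (intro exI[of _ "[:v $ k, u $ k:]"]) (simp add: algebra_simps)
  next
    case False thus ?thesis by (intro exI[of _ "[:x i $ k:]"]) simp
  qed
next
  case (add f g)
  then obtain p q where pq: "\<forall>s. f (x(n := s *s u + v)) = poly p s" "\<forall>s. g (x(n := s *s u + v)) = poly q s" by blast
  show ?case
  proof (intro exI allI)
    fix s show "f (x(n := s *s u + v)) + g (x(n := s *s u + v)) = poly (p + q) s"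
      by (simp only: poly_add pq)
  qed
next
  case (mul f g)
  then obtain p q where pq: "\<forall>s. f (x(n := s *s u + v)) = poly p s" "\<forall>s. g (x(n := s *s u + v)) = poly q s" by blast
  show ?case
  proof (intro exI allI)
    fix s show "f (x(n := s *s u + v)) * g (x(n := s *s u + v)) = poly (p * q) s"
      by (simp only: poly_mult pq)
  qed
qed

definition linepoly :: "(complex^3 \<Rightarrow> complex) \<Rightarrow> bool" where
  "linepoly g \<longleftrightarrow> (\<forall>w0 d. \<exists>p. \<forall>s. g (w0 + s *s d) = poly p s)"

lemma linepoly_id:
  assumes "f \<in> polyfun N" shows "linepoly (\<lambda>h. f (x(n := h)))"
  unfolding linepoly_def
proof (intro allI)
  fix w0 d
  obtain p where "\<forall>s. f (x(n := s *s d + w0)) = poly p s" using polyfun_line[OF assms] by blast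
  thus "\<exists>p. \<forall>s. f (x(n := w0 + s *s d)) = poly p s" by (metis add.commute)
qed

lemma linepoly_crs:
  assumes "f \<in> polyfun N" shows "linepoly (\<lambda>w. f (x(n := crs P w)))"
  unfolding linepoly_def
proof (intro allI)
  fix w0 d
  obtain p where p: "\<forall>s. f (x(n := s *s crs P d + crs P w0)) = poly p s" using polyfun_line[OF assms] by blast
  have "crs P (w0 + s *s d) = s *s crs P d + crs P w0" for s by (simp add: crs_add2)
  thus "\<exists>p. \<forall>s. f (x(n := crs P (w0 + s *s d))) = poly p s" using p by metis
qed

lemma exists_generic:
  assumes "finite S" "0 \<notin> S" shows "\<exists>d. \<forall>r\<in>S. pair3 r d \<noteq> 0"
proof -
  define pp where "pp r = [:r$1, r$2, r$3:]" for r :: "complex^3"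
  have pp: "pair3 r (vector [1, u, u^2]) = poly (pp r) u" for r u
    unfolding pp_def by (simp add: pair3_exp algebra_simps power2_eq_square)
  have nz: "pp r \<noteq> 0" if "r \<in> S" for r
  proof
    assume "pp r = 0"
    hence "r$1 = 0 \<and> r$2 = 0 \<and> r$3 = 0" unfolding pp_def by simp
    hence "r = 0" by (simp add: vec3_0)
    with that assms show False by simp
  qed
  have "finite (\<Union>r\<in>S. {u. poly (pp r) u = 0})"
    using assms(1) nz poly_roots_finite by blast
  hence "\<exists>u. u \<notin> (\<Union>r\<in>S. {u. poly (pp r) u = 0})"
    using ex_new_if_finite[OF infinite_UNIV_char_0] by blast
  then obtain u where "\<forall>r\<in>S. poly (pp r) u \<noteq> 0" by blast
  thus ?thesis using pp by metis
qed

lemma generic_vanish: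
  assumes lp1: "linepoly g1" and lp2: "linepoly g2" and S: "finite S" "0 \<notin> S"
    and van: "\<forall>w. (\<forall>r\<in>S. pair3 r w \<noteq> 0) \<longrightarrow> g1 w * g2 w = 0"
  shows "(\<forall>w. g1 w = 0) \<or> (\<forall>w. g2 w = 0)"
proof -
  obtain d where d: "\<forall>r\<in>S. pair3 r d \<noteq> 0" using exists_generic S by blast
  have all: "g1 w0 * g2 w0 = 0" for w0
  proof -
    obtain p1 where p1: "\<forall>s. g1 (w0 + s *s d) = poly p1 s" using lp1 unfolding linepoly_def by blast
    obtain p2 where p2: "\<forall>s. g2 (w0 + s *s d) = poly p2 s" using lp2 unfolding linepoly_def by blast
    define B where "B = (\<Union>r\<in>S. {s. pair3 r w0 + s * pair3 r d = 0})"
    have "{s. pair3 r w0 + s * pair3 r d = 0} \<subseteq> {- pair3 r w0 / pair3 r d}" if "r \<in> S" for r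
      using d that by (auto simp: field_simps eq_neg_iff_add_eq_0 add.commute)
    hence fB: "finite B" unfolding B_def using S(1) by (meson finite.emptyI finite_UN_I finite_insert finite_subset)
    have "poly (p1 * p2) s = 0" if "s \<notin> B" for s
    proof -
      have "\<forall>r\<in>S. pair3 r (w0 + s *s d) \<noteq> 0" using that unfolding B_def by (auto simp: pair3_add2)
      hence "g1 (w0 + s *s d) * g2 (w0 + s *s d) = 0" using van by blast
      thus ?thesis using p1 p2 by simp
    qed
    hence "UNIV - B \<subseteq> {s. poly (p1 * p2) s = 0}" by auto
    moreover have "infinite (UNIV - B)" using fB infinite_UNIV_char_0[where 'a=complex]
      by (metis Diff_infinite_finite)
    ultimately have "infinite {s. poly (p1 * p2) s = 0}" using infinite_super by blast
    hence "p1 * p2 = 0" using poly_roots_finite by blast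
    hence "poly p1 0 * poly p2 0 = 0" by (metis poly_0 poly_mult)
    moreover have "g1 w0 = poly p1 0" "g2 w0 = poly p2 0"
      using p1[rule_format, of 0] p2[rule_format, of 0] by simp_all
    ultimately show ?thesis by simp
  qed
  show ?thesis
  proof (rule ccontr)
    assume "\<not> ?thesis"
    then obtain w1 w2 where w: "g1 w1 \<noteq> 0" "g2 w2 \<noteq> 0" by blast
    obtain p1 where p1: "\<forall>s. g1 (w1 + s *s (w2 - w1)) = poly p1 s" using lp1 unfolding linepoly_def by blast
    obtain p2 where p2: "\<forall>s. g2 (w1 + s *s (w2 - w1)) = poly p2 s" using lp2 unfolding linepoly_def by blast
    have "\<forall>s. poly (p1 * p2) s = 0"
    proof
      fix s
      have "poly (p1 * p2) s = g1 (w1 + s *s (w2 - w1)) * g2 (w1 + s *s (w2 - w1))"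
        using p1 p2 by (simp only: poly_mult)
      thus "poly (p1 * p2) s = 0" using all by simp
    qed
    hence "p1 * p2 = 0" using poly_all_0_iff_0 by blast
    hence "p1 = 0 \<or> p2 = 0" by simp
    moreover have "poly p1 0 \<noteq> 0" using p1[rule_format, of 0] w by simp
    moreover have "poly p2 1 \<noteq> 0" using p2[rule_format, of 1] w by simp
    ultimately show False by auto
  qed
qed



definition Dt :: "(nat \<Rightarrow> complex^3) \<Rightarrow> nat \<Rightarrow> nat \<Rightarrow> nat \<Rightarrow> complex" where
  "Dt x i j k = pair3 (crs (x i) (x j)) (x k)"

lemma rep_upd:
  assumes "1 \<le> n" "rep (n - 1) G' x" "h \<noteq> 0"
  shows "rep n (G'(n := proj_pt h)) (x(n := h))"
  using assms unfolding rep_def by auto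

lemma rep_restr:
  assumes "rep n G x" shows "rep (n - 1) (G(n := undefined)) x"
  using assms unfolding rep_def by auto

lemma Pspace_upd:
  assumes "1 \<le> n" "G' \<in> Pspace (n - 1)" "L \<in> P2" shows "G'(n := L) \<in> Pspace n"
  using assms unfolding Pspace_def by (auto simp: PiE_iff extensional_def)

lemma Pspace_restr:
  assumes "1 \<le> n" "G \<in> Pspace n" shows "G(n := undefined) \<in> Pspace (n - 1)"
  using assms unfolding Pspace_def by (auto simp: PiE_iff extensional_def)

lemma inc_iff:
  assumes y: "\<forall>i\<in>{1..N}. y i \<noteq> 0 \<and> H i = proj_pt (y i)"
    and ijk: "i \<in> {1..N}" "j \<in> {1..N}" "k \<in> {1..N}" "i \<noteq> j" "i \<noteq> k" "j \<noteq> k"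
  shows "{i, j, k} \<in> incidence N H \<longleftrightarrow> Dt y i j k = 0"
proof -
  have "{i, j, k} \<in> incidence N H \<longleftrightarrow> (\<exists>p\<in>P2. \<forall>l\<in>{i,j,k}. on_line p (H l))"
  proof
    assume "{i, j, k} \<in> incidence N H"
    then obtain a b c p where T: "{i,j,k} = {a,b,c}" "p \<in> P2" "on_line p (H a)" "on_line p (H b)" "on_line p (H c)"
      unfolding incidence_def by blast
    hence "\<forall>l\<in>{a,b,c}. on_line p (H l)" by simp
    hence "\<forall>l\<in>{i,j,k}. on_line p (H l)" by (simp only: T(1))
    thus "\<exists>p\<in>P2. \<forall>l\<in>{i,j,k}. on_line p (H l)" using T(2) by blast
  next
    assume "\<exists>p\<in>P2. \<forall>l\<in>{i,j,k}. on_line p (H l)"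
    hence "\<exists>p\<in>P2. on_line p (H i) \<and> on_line p (H j) \<and> on_line p (H k)" by simp
    thus "{i, j, k} \<in> incidence N H" unfolding incidence_def using ijk by blast
  qed
  also have "\<dots> \<longleftrightarrow> (\<exists>p\<in>P2. on_line p (H i) \<and> on_line p (H j) \<and> on_line p (H k))" by simp
  also have "\<dots> \<longleftrightarrow> Dt y i j k = 0" unfolding Dt_def
    using y ijk conc_iff[of "y i" "y j" "y k"] by auto
  finally show ?thesis .
qed

definition injt :: "nat \<Rightarrow> (nat \<Rightarrow> complex^3) \<Rightarrow> bool" where
  "injt N x \<longleftrightarrow> (\<forall>i\<in>{1..N}. \<forall>j\<in>{1..N}. i \<noteq> j \<longrightarrow> crs (x i) (x j) \<noteq> 0)"

definition samet :: "nat \<Rightarrow> (nat \<Rightarrow> complex^3) \<Rightarrow> (nat \<Rightarrow> complex^3) \<Rightarrow> bool" where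
  "samet N x y \<longleftrightarrow> (\<forall>i\<in>{1..N}. \<forall>j\<in>{1..N}. \<forall>k\<in>{1..N}. i \<noteq> j \<and> i \<noteq> k \<and> j \<noteq> k \<longrightarrow>
      (Dt x i j k = 0 \<longleftrightarrow> Dt y i j k = 0))"

lemma real_char:
  assumes y: "\<forall>i\<in>{1..N}. y i \<noteq> 0 \<and> H i = proj_pt (y i)"
    and G: "G \<in> Pspace N" and x: "rep N G x"
  shows "G \<in> realization N (incidence N H) \<longleftrightarrow> injt N x \<and> samet N x y"
proof -
  have x': "\<forall>i\<in>{1..N}. x i \<noteq> 0 \<and> G i = proj_pt (x i)" using x unfolding rep_def by blast
  have inj: "inj_on G {1..N} \<longleftrightarrow> injt N x"
    unfolding inj_on_def injt_def using x' proj_eq_iff by metis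
  have det: "det0 (G i) (G j) (G k) \<longleftrightarrow> Dt x i j k = 0" if "i \<in> {1..N}" "j \<in> {1..N}" "k \<in> {1..N}" for i j k
    unfolding Dt_def using x' that det0_iff by metis
  show ?thesis
    unfolding realization_def samet_def using G inj det inc_iff[OF y] by auto
qed

lemma rep_H:
  assumes "\<forall>i\<in>{1..N}. H i \<in> P2"
  shows "\<exists>y. \<forall>i\<in>{1..N}. y i \<noteq> 0 \<and> H i = proj_pt (y i)"
proof -
  have "\<forall>i\<in>{1..N}. \<exists>v. v \<noteq> 0 \<and> H i = proj_pt v" using assms P2_iff by blast
  thus ?thesis by metis
qed

lemma core:
  assumes n1: "1 \<le> n"
    and Yirr: "zirreducible (n - 1) Y" and YP: "Y \<subseteq> Pspace (n - 1)"
    and XP: "X \<subseteq> Pspace n" and Xne: "X \<noteq> {}"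
    and restr: "\<forall>G\<in>X. G(n := undefined) \<in> Y"
    and Qok: "\<forall>q\<in>Q. pv (n - 1) q \<and> mhv (n - 1) q"
    and cover: "\<forall>G\<in>X. \<forall>x. rep n G x \<longrightarrow> (\<exists>q\<in>Q. \<exists>c. x n = c *s q x)"
    and fiber: "\<forall>G'\<in>Y. \<forall>x. rep (n - 1) G' x \<longrightarrow> (\<forall>f1 f2. f1 \<in> polyfun n \<and> multihom n f1 \<and> f2 \<in> polyfun n \<and> multihom n f2 \<longrightarrow>
        (\<forall>h. h \<noteq> 0 \<and> G'(n := proj_pt h) \<in> X \<longrightarrow> f1 (x(n := h)) * f2 (x(n := h)) = 0) \<longrightarrow>
        (\<forall>q\<in>Q. f1 (x(n := q x)) = 0) \<or> (\<forall>q\<in>Q. f2 (x(n := q x)) = 0))"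
  shows "zirreducible n X"
proof -
  define \<Phi> where "\<Phi> F = {(\<lambda>x. f (x(n := q x))) | f q. f \<in> F \<and> q \<in> Q}" for F :: "((nat \<Rightarrow> complex^3) \<Rightarrow> complex) set"
  have gPhi: "good (n - 1) (\<Phi> F)" if "good n F" for F
    using that Qok subst_polyfun[OF n1] subst_multihom[OF n1] unfolding good_def \<Phi>_def by blast
  have memPhi: "(\<lambda>x. f (x(n := q x))) \<in> \<Phi> F" if "f \<in> F" "q \<in> Q" for f q F
    unfolding \<Phi>_def using that by blast
  have EY: "G' \<in> Zset (n - 1) (\<Phi> F) \<longleftrightarrow> (\<forall>f\<in>F. \<forall>q\<in>Q. f (x(n := q x)) = 0)"
    if "good n F" "rep (n - 1) G' x" "G' \<in> Pspace (n - 1)" for F G' x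
  proof -
    have "G' \<in> Zset (n - 1) (\<Phi> F) \<longleftrightarrow> (\<forall>g\<in>\<Phi> F. g x = 0)" using Zset_mem[OF gPhi[OF that(1)] that(2,3)] .
    also have "\<dots> \<longleftrightarrow> (\<forall>f\<in>F. \<forall>q\<in>Q. f (x(n := q x)) = 0)"
    proof
      assume "\<forall>g\<in>\<Phi> F. g x = 0" thus "\<forall>f\<in>F. \<forall>q\<in>Q. f (x(n := q x)) = 0" using memPhi by fastforce
    next
      assume "\<forall>f\<in>F. \<forall>q\<in>Q. f (x(n := q x)) = 0" thus "\<forall>g\<in>\<Phi> F. g x = 0" unfolding \<Phi>_def by blast
    qed
    finally show ?thesis .
  qed
  have bk: "X \<subseteq> Zset n F" if gF: "good n F" and sub: "Y \<subseteq> Zset (n - 1) (\<Phi> F)" for F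
  proof
    fix G assume G: "G \<in> X"
    hence GP: "G \<in> Pspace n" using XP by blast
    obtain x where x: "rep n G x" using rep_exists GP by blast
    have "G(n := undefined) \<in> Y" using restr G by blast
    hence "G(n := undefined) \<in> Zset (n - 1) (\<Phi> F)" using sub by blast
    hence van: "\<forall>f\<in>F. \<forall>q\<in>Q. f (x(n := q x)) = 0"
      using EY[OF gF rep_restr[OF x] Pspace_restr[OF n1 GP]] by blast
    obtain q c where qc: "q \<in> Q" "x n = c *s q x" using cover G x by blast
    have "\<forall>f\<in>F. f x = 0"
    proof
      fix f assume f: "f \<in> F"
      obtain d where d: "\<forall>x c v. f (x(n := c *s v)) = c ^ d * f (x(n := v))"
        using multihom_scale_one[of n f n] gF f n1 unfolding good_def by auto
      have "x = x(n := c *s q x)" using qc by auto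
      hence "f x = c ^ d * f (x(n := q x))" using d by metis
      thus "f x = 0" using van f qc by simp
    qed
    thus "G \<in> Zset n F" using Zset_mem[OF gF x GP] by blast
  qed
  show ?thesis unfolding zirreducible_def
  proof (intro conjI allI impI)
    show "X \<noteq> {}" by fact
    fix C1 C2 assume h: "zclosed n C1 \<and> zclosed n C2 \<and> X \<subseteq> C1 \<union> C2"
    obtain F1 where F1: "good n F1" "C1 = Zset n F1" using h zclosed_iff by blast
    obtain F2 where F2: "good n F2" "C2 = Zset n F2" using h zclosed_iff by blast
    have YE: "Y \<subseteq> Zset (n - 1) (\<Phi> F1) \<union> Zset (n - 1) (\<Phi> F2)"
    proof
      fix G' assume G': "G' \<in> Y"
      hence GP: "G' \<in> Pspace (n - 1)" using YP by blast
      obtain x where x: "rep (n - 1) G' x" using rep_exists GP by blast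
      show "G' \<in> Zset (n - 1) (\<Phi> F1) \<union> Zset (n - 1) (\<Phi> F2)"
      proof (rule ccontr)
        assume "\<not> ?thesis"
        then obtain f1 q1 f2 q2 where w: "f1 \<in> F1" "q1 \<in> Q" "f1 (x(n := q1 x)) \<noteq> 0"
          "f2 \<in> F2" "q2 \<in> Q" "f2 (x(n := q2 x)) \<noteq> 0"
          using EY[OF F1(1) x GP] EY[OF F2(1) x GP] by blast
        have fg: "f1 \<in> polyfun n \<and> multihom n f1 \<and> f2 \<in> polyfun n \<and> multihom n f2"
          using w F1 F2 unfolding good_def by blast
        have "f1 (x(n := h)) * f2 (x(n := h)) = 0" if hh: "h \<noteq> 0" "G'(n := proj_pt h) \<in> X" for h
        proof -
          have r: "rep n (G'(n := proj_pt h)) (x(n := h))" using rep_upd[OF n1 x hh(1)] .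
          have GPn: "G'(n := proj_pt h) \<in> Pspace n" using hh XP by blast
          have "G'(n := proj_pt h) \<in> C1 \<union> C2" using hh h by blast
          thus ?thesis using Zset_mem[OF F1(1) r GPn] Zset_mem[OF F2(1) r GPn] F1 F2 w by auto
        qed
        hence "(\<forall>q\<in>Q. f1 (x(n := q x)) = 0) \<or> (\<forall>q\<in>Q. f2 (x(n := q x)) = 0)"
          using fiber G' x fg by blast
        thus False using w by blast
      qed
    qed
    have "zclosed (n - 1) (Zset (n - 1) (\<Phi> F1))" "zclosed (n - 1) (Zset (n - 1) (\<Phi> F2))"
      using gPhi F1 F2 zclosed_iff by blast+
    hence "Y \<subseteq> Zset (n - 1) (\<Phi> F1) \<or> Y \<subseteq> Zset (n - 1) (\<Phi> F2)"
      using Yirr YE unfolding zirreducible_def by blast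
    thus "X \<subseteq> C1 \<or> X \<subseteq> C2" using bk F1 F2 by blast
  qed
qed



lemma Dt_rep[simp]: "Dt x i i k = 0" "Dt x i j i = 0" "Dt x i j j = 0"
  unfolding Dt_def by simp_all

lemma Dt_rot: "Dt x i j k = Dt x j k i" unfolding Dt_def by (rule triple_rot)
lemma Dt_swap: "Dt x i j k = - Dt x j i k" unfolding Dt_def by (rule triple_swap)

lemma Dt_upd: "i \<noteq> n \<Longrightarrow> j \<noteq> n \<Longrightarrow> k \<noteq> n \<Longrightarrow> Dt (x(n := h)) i j k = Dt x i j k"
  unfolding Dt_def by simp
lemma Dt_upd_n: "i \<noteq> n \<Longrightarrow> j \<noteq> n \<Longrightarrow> Dt (x(n := h)) i j n = pair3 (crs (x i) (x j)) h"
  unfolding Dt_def by simp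

lemma samet_all:
  assumes "samet N x y" "i \<in> {1..N}" "j \<in> {1..N}" "k \<in> {1..N}"
  shows "Dt x i j k = 0 \<longleftrightarrow> Dt y i j k = 0"
  using assms unfolding samet_def by (cases "i = j \<or> i = k \<or> j = k") auto

lemma samet_restr: "samet n x y \<Longrightarrow> samet (n - 1) x y"
  unfolding samet_def by auto
lemma injt_restr: "injt n x \<Longrightarrow> injt (n - 1) x"
  unfolding injt_def by auto

lemma samet_ext:
  assumes "1 \<le> n" "samet (n - 1) x y"
    "\<forall>i\<in>{1..n-1}. \<forall>j\<in>{1..n-1}. i \<noteq> j \<longrightarrow> (Dt x i j n = 0 \<longleftrightarrow> Dt y i j n = 0)"
  shows "samet n x y"
  unfolding samet_def
proof (intro ballI impI)
  fix i j k assume r: "i \<in> {1..n}" "j \<in> {1..n}" "k \<in> {1..n}" and d: "i \<noteq> j \<and> i \<noteq> k \<and> j \<noteq> k"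
  consider "i \<noteq> n" "j \<noteq> n" "k \<noteq> n" | "k = n" | "i = n" | "j = n" by blast
  thus "Dt x i j k = 0 \<longleftrightarrow> Dt y i j k = 0"
  proof cases
    case 1 thus ?thesis using assms(2) r d unfolding samet_def by auto
  next
    case 2 thus ?thesis using assms(3) r d by auto
  next
    case 3
    have "Dt x i j k = 0 \<longleftrightarrow> Dt x j k n = 0" using 3 Dt_rot by metis
    also have "\<dots> \<longleftrightarrow> Dt y j k n = 0" using assms(3) r d 3 by auto
    also have "\<dots> \<longleftrightarrow> Dt y i j k = 0" using 3 Dt_rot by metis
    finally show ?thesis .
  next
    case 4
    have "Dt x i j k = 0 \<longleftrightarrow> Dt x k i n = 0" using 4 Dt_rot by metis
    also have "\<dots> \<longleftrightarrow> Dt y k i n = 0" using assms(3) r d 4 by auto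
    also have "\<dots> \<longleftrightarrow> Dt y i j k = 0" using 4 Dt_rot by metis
    finally show ?thesis .
  qed
qed

lemma injt_ext:
  assumes "injt (n - 1) x" "\<forall>i\<in>{1..n-1}. crs (x n) (x i) \<noteq> 0"
  shows "injt n x"
  unfolding injt_def
proof (intro ballI impI)
  fix i j assume r: "i \<in> {1..n}" "j \<in> {1..n}" "i \<noteq> j"
  consider "i \<noteq> n" "j \<noteq> n" | "i = n" | "j = n" by blast
  thus "crs (x i) (x j) \<noteq> 0"
  proof cases
    case 1 thus ?thesis using assms(1) r unfolding injt_def by auto
  next
    case 2 thus ?thesis using assms(2) r by auto
  next
    case 3
    have "crs (x j) (x i) \<noteq> 0" using assms(2) r 3 by auto
    thus ?thesis using crs_anti[of "x i" "x j"] by auto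
  qed
qed

lemma crs2_zero:
  assumes "crs (x a) (x b) \<noteq> 0"
  shows "crs (crs (x i) (x j)) (crs (x a) (x b)) = 0 \<longleftrightarrow> Dt x i j a = 0 \<and> Dt x i j b = 0"
proof -
  have e: "crs (crs (x i) (x j)) (crs (x a) (x b)) = Dt x i j b *s x a + (- Dt x i j a) *s x b"
    unfolding Dt_def crs_crs2 by (simp add: algebra_simps)
  show ?thesis
  proof
    assume "crs (crs (x i) (x j)) (crs (x a) (x b)) = 0"
    hence "Dt x i j b *s x a + (- Dt x i j a) *s x b = 0" using e by simp
    hence "Dt x i j b = 0 \<and> - Dt x i j a = 0" by (rule indep2[OF assms])
    thus "Dt x i j a = 0 \<and> Dt x i j b = 0" by simp
  next
    assume "Dt x i j a = 0 \<and> Dt x i j b = 0" thus "crs (crs (x i) (x j)) (crs (x a) (x b)) = 0"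
      using e by simp
  qed
qed

lemma transfer:
  assumes "injt N x" "injt N y" "samet N x y" "i \<in> {1..N}" "j \<in> {1..N}" "a \<in> {1..N}" "b \<in> {1..N}" "a \<noteq> b"
  shows "crs (crs (x i) (x j)) (crs (x a) (x b)) = 0 \<longleftrightarrow> crs (crs (y i) (y j)) (crs (y a) (y b)) = 0"
proof -
  have "crs (x a) (x b) \<noteq> 0" "crs (y a) (y b) \<noteq> 0" using assms unfolding injt_def by auto
  thus ?thesis using crs2_zero samet_all[OF assms(3)] assms by metis
qed

locale arr =
  fixes n :: nat and H :: "nat \<Rightarrow> (complex^3) set" and y :: "nat \<Rightarrow> complex^3"
  assumes n1: "1 \<le> n"
    and y: "\<forall>i\<in>{1..n}. y i \<noteq> 0 \<and> H i = proj_pt (y i)"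
    and injy: "injt n y"
begin

abbreviation "X \<equiv> realization n (incidence n H)"
abbreviation "Y0 \<equiv> realization (n - 1) (incidence (n - 1) H)"
abbreviation "M \<equiv> {p \<in> mult_pts n H. on_line p (H n)}"

lemma y': "\<forall>i\<in>{1..n-1}. y i \<noteq> 0 \<and> H i = proj_pt (y i)" using y by auto
lemma injy': "injt (n - 1) y" using injy by (rule injt_restr)

lemma yn0: "i \<in> {1..n} \<Longrightarrow> y i \<noteq> 0" using y by auto

lemma crsy: "i \<in> {1..n} \<Longrightarrow> j \<in> {1..n} \<Longrightarrow> i \<noteq> j \<Longrightarrow> crs (y i) (y j) \<noteq> 0"
  using injy unfolding injt_def by auto

lemma XP: "X \<subseteq> Pspace n" unfolding realization_def by auto
lemma Y0P: "Y0 \<subseteq> Pspace (n - 1)" unfolding realization_def by auto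

lemma X_char: "G \<in> Pspace n \<Longrightarrow> rep n G x \<Longrightarrow> G \<in> X \<longleftrightarrow> injt n x \<and> samet n x y"
  using real_char[OF y] by blast
lemma Y0_char: "G \<in> Pspace (n - 1) \<Longrightarrow> rep (n - 1) G x \<Longrightarrow> G \<in> Y0 \<longleftrightarrow> injt (n - 1) x \<and> samet (n - 1) x y"
  using real_char[OF y'] by blast

lemma X_ne: "X \<noteq> {}"
proof -
  define G where "G = (\<lambda>i. if i \<in> {1..n} then H i else undefined)"
  have P: "G \<in> Pspace n" unfolding G_def Pspace_def using y P2_iff by (auto simp: PiE_iff extensional_def)
  have r: "rep n G y" unfolding rep_def G_def using y by auto
  have "samet n y y" unfolding samet_def by auto
  hence "G \<in> X" using X_char[OF P r] injy by blast
  thus ?thesis by blast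
qed

lemma X_restr: "G \<in> X \<Longrightarrow> G(n := undefined) \<in> Y0"
proof -
  assume G: "G \<in> X"
  hence P: "G \<in> Pspace n" using XP by blast
  obtain x where x: "rep n G x" using rep_exists P by blast
  have "injt n x \<and> samet n x y" using X_char[OF P x] G by blast
  thus ?thesis using Y0_char[OF Pspace_restr[OF n1 P] rep_restr[OF x]] injt_restr samet_restr by blast
qed

lemma X_ext:
  assumes G': "G' \<in> Y0" and x: "rep (n - 1) G' x" and h: "h \<noteq> 0"
    and i1: "\<forall>i\<in>{1..n-1}. crs h (x i) \<noteq> 0"
    and i2: "\<forall>i\<in>{1..n-1}. \<forall>j\<in>{1..n-1}. i \<noteq> j \<longrightarrow> (pair3 (crs (x i) (x j)) h = 0 \<longleftrightarrow> Dt y i j n = 0)"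
  shows "G'(n := proj_pt h) \<in> X"
proof -
  have P': "G' \<in> Pspace (n - 1)" using G' Y0P by blast
  have P: "G'(n := proj_pt h) \<in> Pspace n" using Pspace_upd[OF n1 P'] h P2_iff by blast
  have r: "rep n (G'(n := proj_pt h)) (x(n := h))" using rep_upd[OF n1 x h] .
  have ts: "injt (n - 1) x \<and> samet (n - 1) x y" using Y0_char[OF P' x] G' by blast
  have "injt (n - 1) (x(n := h))" using ts unfolding injt_def by auto
  moreover have "\<forall>i\<in>{1..n-1}. crs ((x(n := h)) n) ((x(n := h)) i) \<noteq> 0" using i1 by auto
  ultimately have I: "injt n (x(n := h))" by (rule injt_ext)
  have "samet (n - 1) (x(n := h)) y" using ts unfolding samet_def by (auto simp: Dt_upd)
  moreover have "\<forall>i\<in>{1..n-1}. \<forall>j\<in>{1..n-1}. i \<noteq> j \<longrightarrow> (Dt (x(n := h)) i j n = 0 \<longleftrightarrow> Dt y i j n = 0)"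
    using i2 by (auto simp: Dt_upd_n)
  ultimately have S: "samet n (x(n := h)) y" using samet_ext[OF n1] by blast
  show ?thesis using X_char[OF P r] I S by blast
qed

lemma X_props:
  assumes "G \<in> X" "rep n G x" shows "injt n x" "samet n x y"
  using X_char assms XP by blast+

lemma M1:
  assumes "i \<in> {1..n-1}" "j \<in> {1..n-1}" "i \<noteq> j" "Dt y i j n = 0"
  shows "proj_pt (crs (y i) (y j)) \<in> M"
proof -
  let ?v = "crs (y i) (y j)"
  have v0: "?v \<noteq> 0" using crsy assms by auto
  have ol: "on_line (proj_pt ?v) (H l) \<longleftrightarrow> pair3 (y l) ?v = 0" if "l \<in> {1..n}" for l
    using on_line_iff[OF yn0[OF that] v0] y that by auto
  have rr: "i \<in> {1..n}" "j \<in> {1..n}" "n \<in> {1..n}" using assms n1 by auto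
  have "pair3 (y n) ?v = 0" using assms(4) unfolding Dt_def by (metis pair3_comm)
  hence on: "on_line (proj_pt ?v) (H i)" "on_line (proj_pt ?v) (H j)" "on_line (proj_pt ?v) (H n)"
    using ol[OF rr(1)] ol[OF rr(2)] ol[OF rr(3)] by simp_all
  have "{i, j, n} \<subseteq> {l \<in> {1..n}. on_line (proj_pt ?v) (H l)}"
    using rr on by blast
  moreover have "i \<noteq> n" "j \<noteq> n" using assms(1,2) n1 by auto
  hence "card {i, j, n} = 3" using assms(3) by simp
  moreover have "finite {l \<in> {1..n}. on_line (proj_pt ?v) (H l)}" by simp
  ultimately have "3 \<le> card {l \<in> {1..n}. on_line (proj_pt ?v) (H l)}"
    using card_mono by metis
  moreover have "proj_pt ?v \<in> P2" using v0 P2_iff by blast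
  moreover note on(3)
  ultimately show ?thesis unfolding mult_pts_def by blast
qed

lemma M2:
  assumes "p \<in> M"
  shows "\<exists>a b. a \<in> {1..n-1} \<and> b \<in> {1..n-1} \<and> a \<noteq> b \<and> p = proj_pt (crs (y a) (y b)) \<and> Dt y a b n = 0"
proof -
  define L where "L = {l \<in> {1..n}. on_line p (H l)}"
  have p: "p \<in> P2" "3 \<le> card L" "on_line p (H n)" using assms unfolding mult_pts_def L_def by auto
  obtain v where v: "v \<noteq> 0" "p = proj_pt v" using p P2_iff by blast
  have ol: "on_line p (H l) \<longleftrightarrow> pair3 (y l) v = 0" if "l \<in> {1..n}" for l
    using on_line_iff[OF yn0[OF that] v(1)] y that v by auto
  have "finite L" unfolding L_def by simp
  have "card L - card {n} \<le> card (L - {n})" by (rule diff_card_le_card_Diff) simp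
  hence c2: "2 \<le> card (L - {n})" using p(2) by simp
  hence "L - {n} \<noteq> {}" by (metis card.empty not_numeral_le_zero)
  then obtain a where a: "a \<in> L - {n}" by blast
  have "card (L - {n}) - card {a} \<le> card (L - {n} - {a})" by (rule diff_card_le_card_Diff) simp
  hence "1 \<le> card (L - {n} - {a})" using c2 by simp
  hence "L - {n} - {a} \<noteq> {}" by (metis card.empty not_one_le_zero)
  then obtain b where b: "b \<in> L - {n} - {a}" by blast
  have ab: "a \<in> L - {n}" "b \<in> L - {n}" "a \<noteq> b" using a b by auto
  have abr: "a \<in> {1..n-1}" "b \<in> {1..n-1}" using ab unfolding L_def by auto
  have o: "pair3 (y a) v = 0" "pair3 (y b) v = 0" using ab ol unfolding L_def by auto
  have c0: "crs (y a) (y b) \<noteq> 0" using crsy abr ab by auto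
  obtain k where k: "v = k *s crs (y a) (y b)" using orth_crs[OF c0] o by blast
  hence k0: "k \<noteq> 0" using v by auto
  have pv: "p = proj_pt (crs (y a) (y b))" using v k k0 proj_pt_scale by simp
  have "pair3 (y n) v = 0" using ol[of n] n1 p(3) by auto
  hence "k * Dt y a b n = 0" unfolding Dt_def using k by (simp add: pair3_comm[of "y n"])
  hence "Dt y a b n = 0" using k0 by simp
  thus ?thesis using abr ab pv by blast
qed

end



definition ort :: "complex^3 \<Rightarrow> complex^3" where
  "ort u = (SOME v. v \<noteq> 0 \<and> pair3 u v = 0)"

lemma ort: "ort u \<noteq> 0" "pair3 u (ort u) = 0"
  using someI_ex[OF exists_orth[of u]] unfolding ort_def by auto

context arr begin

lemma Y0_props:
  assumes "G' \<in> Y0" "rep (n - 1) G' x" shows "injt (n - 1) x" "samet (n - 1) x y"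
  using Y0_char assms Y0P by blast+

lemma case0:
  assumes M: "M = {}" and irr: "zirreducible (n - 1) Y0"
  shows "zirreducible n X"
proof -
  have Dn: "Dt y i j n \<noteq> 0" if "i \<in> {1..n-1}" "j \<in> {1..n-1}" "i \<noteq> j" for i j
    using M1[OF that] M by blast
  let ?Q = "range (\<lambda>h::complex^3. \<lambda>x::nat \<Rightarrow> complex^3. h)"
  show ?thesis
  proof (rule core[OF n1 irr Y0P XP X_ne, where Q = ?Q])
    show "\<forall>G\<in>X. G(n := undefined) \<in> Y0" using X_restr by blast
    show "\<forall>q\<in>?Q. pv (n - 1) q \<and> mhv (n - 1) q" using pv_const mhv_const by blast
    show "\<forall>G\<in>X. \<forall>x. rep n G x \<longrightarrow> (\<exists>q\<in>?Q. \<exists>c. x n = c *s q x)"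
    proof (intro ballI allI impI)
      fix G x assume "G \<in> X" "rep n G x"
      show "\<exists>q\<in>?Q. \<exists>c. x n = c *s q x" by (rule bexI[of _ "\<lambda>_. x n"]) (auto intro: exI[of _ 1])
    qed
    show "\<forall>G'\<in>Y0. \<forall>x. rep (n - 1) G' x \<longrightarrow> (\<forall>f1 f2. f1 \<in> polyfun n \<and> multihom n f1 \<and> f2 \<in> polyfun n \<and> multihom n f2 \<longrightarrow>
        (\<forall>h. h \<noteq> 0 \<and> G'(n := proj_pt h) \<in> X \<longrightarrow> f1 (x(n := h)) * f2 (x(n := h)) = 0) \<longrightarrow>
        (\<forall>q\<in>?Q. f1 (x(n := q x)) = 0) \<or> (\<forall>q\<in>?Q. f2 (x(n := q x)) = 0))"
    proof (intro ballI allI impI)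
      fix G' x f1 f2
      assume G': "G' \<in> Y0" and x: "rep (n - 1) G' x"
        and fs: "f1 \<in> polyfun n \<and> multihom n f1 \<and> f2 \<in> polyfun n \<and> multihom n f2"
        and van: "\<forall>h. h \<noteq> 0 \<and> G'(n := proj_pt h) \<in> X \<longrightarrow> f1 (x(n := h)) * f2 (x(n := h)) = 0"
      have ix: "injt (n - 1) x" using Y0_props[OF G' x] by blast
      have x0: "\<forall>i\<in>{1..n-1}. x i \<noteq> 0" using x unfolding rep_def by blast
      define S where "S = ((\<lambda>(i,j). crs (x i) (x j)) ` ({1..n-1} \<times> {1..n-1}) \<union> (\<lambda>i. ort (x i)) ` {1..n-1}
          \<union> {vector [1,0,0]}) - {0}"
      have fS: "finite S" "0 \<notin> S" unfolding S_def by auto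
      have e1: "vector [1,0,0] \<in> S" unfolding S_def by (auto simp: vec3_0)
      have oS: "ort (x i) \<in> S" if "i \<in> {1..n-1}" for i unfolding S_def using that ort(1) by auto
      have cS: "crs (x i) (x j) \<in> S" if "i \<in> {1..n-1}" "j \<in> {1..n-1}" "i \<noteq> j" for i j
        unfolding S_def using that ix unfolding injt_def by auto
      have "(\<forall>w. f1 (x(n := w)) = 0) \<or> (\<forall>w. f2 (x(n := w)) = 0)"
      proof (rule generic_vanish[OF linepoly_id linepoly_id fS])
        show "f1 \<in> polyfun n" "f2 \<in> polyfun n" using fs by auto
        show "\<forall>w. (\<forall>r\<in>S. pair3 r w \<noteq> 0) \<longrightarrow> f1 (x(n := w)) * f2 (x(n := w)) = 0"
        proof (intro allI impI)
          fix w assume w: "\<forall>r\<in>S. pair3 r w \<noteq> 0"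
          have w0: "w \<noteq> 0" using w e1 by auto
          have i1: "\<forall>i\<in>{1..n-1}. crs w (x i) \<noteq> 0"
          proof (intro ballI notI)
            fix i assume i: "i \<in> {1..n-1}" and c: "crs w (x i) = 0"
            hence "crs (x i) w = 0" using crs_anti[of w "x i"] by simp
            then obtain k where "w = k *s x i" using crs_zero_prop x0 i by blast
            hence "pair3 (ort (x i)) w = 0" using ort(2)[of "x i"] by (simp add: pair3_comm)
            thus False using w oS[OF i] by blast
          qed
          have i2: "\<forall>i\<in>{1..n-1}. \<forall>j\<in>{1..n-1}. i \<noteq> j \<longrightarrow> (pair3 (crs (x i) (x j)) w = 0 \<longleftrightarrow> Dt y i j n = 0)"
            using w cS Dn by blast
          have "G'(n := proj_pt w) \<in> X" using X_ext[OF G' x w0 i1 i2] .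
          thus "f1 (x(n := w)) * f2 (x(n := w)) = 0" using van w0 by blast
        qed
      qed
      thus "(\<forall>q\<in>?Q. f1 (x(n := q x)) = 0) \<or> (\<forall>q\<in>?Q. f2 (x(n := q x)) = 0)" by auto
    qed
  qed
qed

end


context arr begin

lemma transfer_y:
  assumes "injt (n - 1) x" "samet (n - 1) x y" "i \<in> {1..n-1}" "j \<in> {1..n-1}" "a \<in> {1..n-1}" "b \<in> {1..n-1}" "a \<noteq> b"
  shows "crs (crs (x i) (x j)) (crs (x a) (x b)) = 0 \<longleftrightarrow> crs (crs (y i) (y j)) (crs (y a) (y b)) = 0"
  using transfer[OF assms(1) injy' assms(2-)] .

lemma Mcoll:
  assumes "a \<in> {1..n-1}" "b \<in> {1..n-1}" "a \<noteq> b" "Dt y a b n = 0"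
    "i \<in> {1..n-1}" "j \<in> {1..n-1}" "crs (crs (y i) (y j)) (crs (y a) (y b)) = 0"
  shows "Dt y i j n = 0"
proof -
  have P0: "crs (y a) (y b) \<noteq> 0" using crsy assms by auto
  have "crs (crs (y a) (y b)) (crs (y i) (y j)) = 0" using assms(7) crs_anti[of "crs (y i) (y j)"] by simp
  then obtain k where "crs (y i) (y j) = k *s crs (y a) (y b)" using crs_zero_prop[OF P0] by blast
  hence "Dt y i j n = k * Dt y a b n" unfolding Dt_def by simp
  thus ?thesis using assms(4) by simp
qed

lemma Mpt:
  assumes "i \<in> {1..n-1}" "j \<in> {1..n-1}" "i \<noteq> j" "Dt y i j n = 0"
    "proj_pt (crs (y i) (y j)) = proj_pt (crs (y a) (y b))" "a \<in> {1..n-1}" "b \<in> {1..n-1}" "a \<noteq> b"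
  shows "crs (crs (y i) (y j)) (crs (y a) (y b)) = 0"
  using proj_eq_iff[of "crs (y i) (y j)" "crs (y a) (y b)"] crsy assms by auto

lemma case1:
  assumes M: "M = {p}" and irr: "zirreducible (n - 1) Y0"
  shows "zirreducible n X"
proof -
  obtain a b where ab: "a \<in> {1..n-1}" "b \<in> {1..n-1}" "a \<noteq> b" "p = proj_pt (crs (y a) (y b))" "Dt y a b n = 0"
    using M2[of p] M by blast
  have E1: "Dt y i j n = 0 \<longleftrightarrow> crs (crs (y i) (y j)) (crs (y a) (y b)) = 0"
    if ij: "i \<in> {1..n-1}" "j \<in> {1..n-1}" for i j
  proof (cases "i = j")
    case True thus ?thesis by simp
  next
    case False
    show ?thesis
    proof
      assume "Dt y i j n = 0"
      hence "proj_pt (crs (y i) (y j)) \<in> M" using M1 ij False by blast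
      hence "proj_pt (crs (y i) (y j)) = proj_pt (crs (y a) (y b))" using M ab by blast
      thus "crs (crs (y i) (y j)) (crs (y a) (y b)) = 0" using Mpt ij False \<open>Dt y i j n = 0\<close> ab by blast
    qed (use Mcoll ab ij in blast)
  qed
  let ?P = "\<lambda>x::nat \<Rightarrow> complex^3. crs (x a) (x b)"
  let ?Q = "range (\<lambda>w::complex^3. \<lambda>x::nat \<Rightarrow> complex^3. crs (crs (x a) (x b)) w)"
  have abn: "a \<in> {1..n}" "b \<in> {1..n}" using ab by auto
  show ?thesis
  proof (rule core[OF n1 irr Y0P XP X_ne, where Q = ?Q])
    show "\<forall>G\<in>X. G(n := undefined) \<in> Y0" using X_restr by blast
    show "\<forall>q\<in>?Q. pv (n - 1) q \<and> mhv (n - 1) q"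
      using ab by (auto intro!: pv_crs mhv_crs pv_coord mhv_coord pv_const mhv_const)
    show "\<forall>G\<in>X. \<forall>x. rep n G x \<longrightarrow> (\<exists>q\<in>?Q. \<exists>c. x n = c *s q x)"
    proof (intro ballI allI impI)
      fix G x assume G: "G \<in> X" and x: "rep n G x"
      have ix: "injt n x" "samet n x y" using X_props[OF G x] by auto
      have P0: "?P x \<noteq> 0" using ix ab unfolding injt_def by auto
      have "Dt x a b n = 0" using samet_all[OF ix(2) abn] n1 ab by auto
      hence Pn: "pair3 (?P x) (x n) = 0" unfolding Dt_def .
      obtain e where e: "pair3 (?P x) e \<noteq> 0" using exists_generic[of "{?P x}"] P0 by auto
      have "crs (?P x) (crs (x n) e) = pair3 (?P x) e *s x n"
        using Pn by (simp add: crs_crs2)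
      hence "x n = (1 / pair3 (?P x) e) *s crs (?P x) (crs (x n) e)" using e
        by (simp add: vector_smult_assoc)
      thus "\<exists>q\<in>?Q. \<exists>c. x n = c *s q x"
        by (intro bexI[OF _ rangeI[of _ "crs (x n) e"]] exI[of _ "1 / pair3 (?P x) e"]) simp
    qed
    show "\<forall>G'\<in>Y0. \<forall>x. rep (n - 1) G' x \<longrightarrow> (\<forall>f1 f2. f1 \<in> polyfun n \<and> multihom n f1 \<and> f2 \<in> polyfun n \<and> multihom n f2 \<longrightarrow>
        (\<forall>h. h \<noteq> 0 \<and> G'(n := proj_pt h) \<in> X \<longrightarrow> f1 (x(n := h)) * f2 (x(n := h)) = 0) \<longrightarrow>
        (\<forall>q\<in>?Q. f1 (x(n := q x)) = 0) \<or> (\<forall>q\<in>?Q. f2 (x(n := q x)) = 0))"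
    proof (intro ballI allI impI)
      fix G' x f1 f2
      assume G': "G' \<in> Y0" and x: "rep (n - 1) G' x"
        and fs: "f1 \<in> polyfun n \<and> multihom n f1 \<and> f2 \<in> polyfun n \<and> multihom n f2"
        and van: "\<forall>h. h \<noteq> 0 \<and> G'(n := proj_pt h) \<in> X \<longrightarrow> f1 (x(n := h)) * f2 (x(n := h)) = 0"
      have ix: "injt (n - 1) x" "samet (n - 1) x y" using Y0_props[OF G' x] by auto
      have x0: "\<forall>i\<in>{1..n-1}. x i \<noteq> 0" using x unfolding rep_def by blast
      define P where "P = ?P x"
      have P0: "P \<noteq> 0" using ix ab unfolding injt_def P_def by auto
      have E1x: "Dt y i j n = 0 \<longleftrightarrow> crs (crs (x i) (x j)) P = 0" if "i \<in> {1..n-1}" "j \<in> {1..n-1}" for i j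
        using E1[OF that] transfer_y[OF ix that ab(1-3)] unfolding P_def by simp
      define S where "S = (x ` {i \<in> {1..n-1}. pair3 (x i) P = 0} \<union>
          (\<lambda>(i,j). crs (crs (x i) (x j)) P) ` ({1..n-1} \<times> {1..n-1})) - {0}"
      have fS: "finite S" "0 \<notin> S" unfolding S_def by auto
      have xS: "x i \<in> S" if "i \<in> {1..n-1}" "pair3 (x i) P = 0" for i
        unfolding S_def using that x0 by auto
      have cS: "crs (crs (x i) (x j)) P \<in> S" if "i \<in> {1..n-1}" "j \<in> {1..n-1}" "crs (crs (x i) (x j)) P \<noteq> 0" for i j
        unfolding S_def using that by auto
      have aS: "x a \<in> S" using xS[OF ab(1)] unfolding P_def by simp
      have "(\<forall>w. f1 (x(n := crs P w)) = 0) \<or> (\<forall>w. f2 (x(n := crs P w)) = 0)"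
      proof (rule generic_vanish[OF linepoly_crs linepoly_crs fS])
        show "f1 \<in> polyfun n" "f2 \<in> polyfun n" using fs by auto
        show "\<forall>w. (\<forall>r\<in>S. pair3 r w \<noteq> 0) \<longrightarrow> f1 (x(n := crs P w)) * f2 (x(n := crs P w)) = 0"
        proof (intro allI impI)
          fix w assume w: "\<forall>r\<in>S. pair3 r w \<noteq> 0"
          have wa: "pair3 (x a) w \<noteq> 0" using w aS by blast
          have notP: "False" if "w = k *s P" for k
          proof -
            have "pair3 (x a) w = 0" using that unfolding P_def by simp
            thus False using wa by blast
          qed
          have h0: "crs P w \<noteq> 0"
          proof
            assume "crs P w = 0"
            then obtain k where "w = k *s P" using crs_zero_prop[OF P0] by blast
            thus False using notP by blast
          qed
          have i1: "\<forall>i\<in>{1..n-1}. crs (crs P w) (x i) \<noteq> 0"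
          proof (intro ballI notI)
            fix i assume i: "i \<in> {1..n-1}" and c: "crs (crs P w) (x i) = 0"
            hence e: "pair3 P (x i) *s w = pair3 w (x i) *s P" by (simp add: crs_crs)
            show False
            proof (cases "pair3 P (x i) = 0")
              case True
              hence "pair3 w (x i) *s P = 0" using e by simp
              hence "pair3 w (x i) = 0" using P0 by (simp add: vec3_0) (metis mult_eq_0_iff)
              moreover have "x i \<in> S" using xS[OF i] True by (simp add: pair3_comm)
              ultimately show False using w pair3_comm[of w "x i"] by metis
            next
              case False
              have "w = (1 / pair3 P (x i)) *s (pair3 P (x i) *s w)" using False by (simp add: vector_smult_assoc)
              also have "\<dots> = (pair3 w (x i) / pair3 P (x i)) *s P" unfolding e by (simp add: vector_smult_assoc)
              finally have "w = (pair3 w (x i) / pair3 P (x i)) *s P" .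
              thus False using notP by blast
            qed
          qed
          have i2: "\<forall>i\<in>{1..n-1}. \<forall>j\<in>{1..n-1}. i \<noteq> j \<longrightarrow> (pair3 (crs (x i) (x j)) (crs P w) = 0 \<longleftrightarrow> Dt y i j n = 0)"
          proof (intro ballI impI)
            fix i j assume ij: "i \<in> {1..n-1}" "j \<in> {1..n-1}" "i \<noteq> j"
            have tr: "pair3 (crs (x i) (x j)) (crs P w) = pair3 (crs (crs (x i) (x j)) P) w" by (rule triple_assoc)
            show "pair3 (crs (x i) (x j)) (crs P w) = 0 \<longleftrightarrow> Dt y i j n = 0"
            proof (cases "crs (crs (x i) (x j)) P = 0")
              case True thus ?thesis using tr E1x[OF ij(1,2)] by simp
            next
              case False thus ?thesis using tr E1x[OF ij(1,2)] w cS[OF ij(1,2)] by auto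
            qed
          qed
          have "G'(n := proj_pt (crs P w)) \<in> X" using X_ext[OF G' x h0 i1 i2] .
          thus "f1 (x(n := crs P w)) * f2 (x(n := crs P w)) = 0" using van h0 by blast
        qed
      qed
      thus "(\<forall>q\<in>?Q. f1 (x(n := q x)) = 0) \<or> (\<forall>q\<in>?Q. f2 (x(n := q x)) = 0)" unfolding P_def by auto
    qed
  qed
qed

end


lemma pv_pair3: "pv M p \<Longrightarrow> pv M q \<Longrightarrow> (\<lambda>x. pair3 (p x) (q x)) \<in> polyfun M"
  unfolding pv_def pair3_exp by (intro polyfun.add polyfun.mul) auto

lemma mh_pair3:
  assumes "mhv M p" "mhv M q" shows "multihom M (\<lambda>x. pair3 (p x) (q x))"
proof -
  obtain d where d: "\<forall>c x. p (\<lambda>i. c i *s x i) = (\<Prod>i\<in>{1..M}. c i ^ d i) *s p x"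
    using assms unfolding mhv_def by blast
  obtain e where e: "\<forall>c x. q (\<lambda>i. c i *s x i) = (\<Prod>i\<in>{1..M}. c i ^ e i) *s q x"
    using assms unfolding mhv_def by blast
  have pr: "(\<Prod>i\<in>{1..M}. c i ^ (d i + e i)) = (\<Prod>i\<in>{1..M}. c i ^ d i) * (\<Prod>i\<in>{1..M}. c i ^ e i)" for c :: "nat \<Rightarrow> complex"
    by (simp add: power_add prod.distrib)
  show ?thesis unfolding multihom_def
  proof (intro exI allI)
    fix c x
    have "pair3 (p (\<lambda>i. c i *s x i)) (q (\<lambda>i. c i *s x i))
       = (\<Prod>i\<in>{1..M}. c i ^ d i) * ((\<Prod>i\<in>{1..M}. c i ^ e i) * pair3 (p x) (q x))"
      by (simp add: d e)
    also have "\<dots> = (\<Prod>i\<in>{1..M}. c i ^ (d i + e i)) * pair3 (p x) (q x)"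
      by (simp only: pr mult.assoc)
    finally show "pair3 (p (\<lambda>i. c i *s x i)) (q (\<lambda>i. c i *s x i)) = (\<Prod>i\<in>{1..M}. c i ^ (d i + e i)) * pair3 (p x) (q x)" .
  qed
qed

lemma mh_comp: "mhv M v \<Longrightarrow> multihom M (\<lambda>x. v x $ k)"
  unfolding mhv_def multihom_def by auto

definition VZ :: "nat \<Rightarrow> ((nat \<Rightarrow> complex^3) \<Rightarrow> complex^3) \<Rightarrow> (nat \<Rightarrow> (complex^3) set) set" where
  "VZ M v = Zset M (range (\<lambda>k x. v x $ k))"

lemma VZ_good: "pv M v \<Longrightarrow> mhv M v \<Longrightarrow> good M (range (\<lambda>k x. v x $ k))"
  unfolding good_def pv_def using mh_comp by auto

lemma VZ_closed: "pv M v \<Longrightarrow> mhv M v \<Longrightarrow> zclosed M (VZ M v)"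
  unfolding VZ_def zclosed_iff using VZ_good by blast

lemma VZ_mem: "pv M v \<Longrightarrow> mhv M v \<Longrightarrow> rep M G x \<Longrightarrow> G \<in> Pspace M \<Longrightarrow> G \<in> VZ M v \<longleftrightarrow> v x = 0"
  unfolding VZ_def using Zset_mem[OF VZ_good] by (auto simp: vec_eq_iff)

lemma SZ_closed: "g \<in> polyfun M \<Longrightarrow> multihom M g \<Longrightarrow> zclosed M (Zset M {g})"
  unfolding zclosed_iff good_def by blast

lemma SZ_mem: "g \<in> polyfun M \<Longrightarrow> multihom M g \<Longrightarrow> rep M G x \<Longrightarrow> G \<in> Pspace M \<Longrightarrow> G \<in> Zset M {g} \<longleftrightarrow> g x = 0"
  using Zset_mem[of M "{g}"] unfolding good_def by auto

context arr begin

lemma case2: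
  assumes M: "M = {p, q}" "p \<noteq> q" and irr: "zirreducible (n - 1) Y0"
  shows "zirreducible n X"
proof -
  obtain a b where ab: "a \<in> {1..n-1}" "b \<in> {1..n-1}" "a \<noteq> b" "p = proj_pt (crs (y a) (y b))" "Dt y a b n = 0"
    using M2[of p] M by blast
  obtain c d where cd: "c \<in> {1..n-1}" "d \<in> {1..n-1}" "c \<noteq> d" "q = proj_pt (crs (y c) (y d))" "Dt y c d n = 0"
    using M2[of q] M by blast
  have E2: "Dt y i j n = 0 \<longleftrightarrow> (crs (crs (y i) (y j)) (crs (y a) (y b)) = 0 \<or> crs (crs (y i) (y j)) (crs (y c) (y d)) = 0)"
    if ij: "i \<in> {1..n-1}" "j \<in> {1..n-1}" for i j
  proof (cases "i = j")
    case True thus ?thesis by simp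
  next
    case False
    show ?thesis
    proof
      assume D: "Dt y i j n = 0"
      hence "proj_pt (crs (y i) (y j)) \<in> M" using M1 ij False by blast
      hence "proj_pt (crs (y i) (y j)) = proj_pt (crs (y a) (y b)) \<or> proj_pt (crs (y i) (y j)) = proj_pt (crs (y c) (y d))"
        using M ab cd by blast
      thus "crs (crs (y i) (y j)) (crs (y a) (y b)) = 0 \<or> crs (crs (y i) (y j)) (crs (y c) (y d)) = 0"
        using Mpt[OF ij False D _ ab(1-3)] Mpt[OF ij False D _ cd(1-3)] by blast
    qed (use Mcoll ab cd ij in blast)
  qed
  have pq: "crs (crs (y a) (y b)) (crs (y c) (y d)) \<noteq> 0"
  proof
    assume "crs (crs (y a) (y b)) (crs (y c) (y d)) = 0"
    moreover have "crs (y a) (y b) \<noteq> 0" "crs (y c) (y d) \<noteq> 0" using crsy ab cd by auto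
    ultimately have "proj_pt (crs (y a) (y b)) = proj_pt (crs (y c) (y d))"
      using proj_eq_iff by blast
    thus False using M ab cd by simp
  qed
  define h where "h = (\<lambda>x::nat \<Rightarrow> complex^3. crs (crs (x a) (x b)) (crs (x c) (x d)))"
  have pvh: "pv (n - 1) h" "mhv (n - 1) h" unfolding h_def
    using ab cd by (auto intro!: pv_crs mhv_crs pv_coord mhv_coord)
  have h0: "h x \<noteq> 0" if "injt (n - 1) x" "samet (n - 1) x y" for x
    unfolding h_def using transfer_y[OF that ab(1,2) cd(1-3)] pq by blast
  have pvi: "pv (n - 1) (\<lambda>x. crs (h x) (x i))" "mhv (n - 1) (\<lambda>x. crs (h x) (x i))" if "i \<in> {1..n-1}" for i
    using pvh that by (auto intro!: pv_crs mhv_crs pv_coord mhv_coord)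
  have pvij: "(\<lambda>x. pair3 (crs (x i) (x j)) (h x)) \<in> polyfun (n - 1)" "multihom (n - 1) (\<lambda>x. pair3 (crs (x i) (x j)) (h x))"
    if "i \<in> {1..n-1}" "j \<in> {1..n-1}" for i j
    using pvh that by (auto intro!: pv_pair3 mh_pair3 pv_crs mhv_crs pv_coord mhv_coord)
  define Zs where "Zs = {VZ (n - 1) h} \<union> (\<lambda>i. VZ (n - 1) (\<lambda>x. crs (h x) (x i))) ` {1..n-1}
     \<union> (\<lambda>(i,j). Zset (n - 1) {\<lambda>x. pair3 (crs (x i) (x j)) (h x)}) ` {(i,j). i \<in> {1..n-1} \<and> j \<in> {1..n-1} \<and> Dt y i j n \<noteq> 0}"
  define Z where "Z = \<Union>Zs"
  have fZs: "finite Zs" unfolding Zs_def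
    by (intro finite_UnI finite_imageI) (auto intro: finite_subset[of _ "{1..n-1} \<times> {1..n-1}"])
  have cZs: "\<forall>C\<in>Zs. zclosed (n - 1) C" unfolding Zs_def
    using VZ_closed pvh pvi SZ_closed pvij by auto
  have Zc: "zclosed (n - 1) Z" unfolding Z_def using zclosed_Union[OF fZs cZs] .
  have notZ: "G' \<notin> Z \<longleftrightarrow> h x \<noteq> 0 \<and> (\<forall>i\<in>{1..n-1}. crs (h x) (x i) \<noteq> 0) \<and>
      (\<forall>i\<in>{1..n-1}. \<forall>j\<in>{1..n-1}. Dt y i j n \<noteq> 0 \<longrightarrow> pair3 (crs (x i) (x j)) (h x) \<noteq> 0)"
    if G': "G' \<in> Pspace (n - 1)" and x: "rep (n - 1) G' x" for G' x
  proof -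
    have "G' \<in> Z \<longleftrightarrow> h x = 0 \<or> (\<exists>i\<in>{1..n-1}. crs (h x) (x i) = 0) \<or>
      (\<exists>i\<in>{1..n-1}. \<exists>j\<in>{1..n-1}. Dt y i j n \<noteq> 0 \<and> pair3 (crs (x i) (x j)) (h x) = 0)"
    proof -
      have m1: "G' \<in> VZ (n - 1) h \<longleftrightarrow> h x = 0" by (rule VZ_mem[OF pvh x G'])
      have m2: "G' \<in> VZ (n - 1) (\<lambda>x. crs (h x) (x i)) \<longleftrightarrow> crs (h x) (x i) = 0" if "i \<in> {1..n-1}" for i
        by (rule VZ_mem[OF pvi(1)[OF that] pvi(2)[OF that] x G'])
      have m3: "G' \<in> Zset (n - 1) {\<lambda>x. pair3 (crs (x i) (x j)) (h x)} \<longleftrightarrow> pair3 (crs (x i) (x j)) (h x) = 0"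
        if "i \<in> {1..n-1}" "j \<in> {1..n-1}" for i j
        by (rule SZ_mem[OF pvij(1)[OF that] pvij(2)[OF that] x G'])
      show ?thesis unfolding Z_def Zs_def
      proof
        assume "G' \<in> \<Union>({VZ (n - 1) h} \<union> (\<lambda>i. VZ (n - 1) (\<lambda>x. crs (h x) (x i))) ` {1..n - 1} \<union>
          (\<lambda>(i, j). Zset (n - 1) {\<lambda>x. pair3 (crs (x i) (x j)) (h x)}) ` {(i, j). i \<in> {1..n - 1} \<and> j \<in> {1..n - 1} \<and> Dt y i j n \<noteq> 0})"
        thus "h x = 0 \<or> (\<exists>i\<in>{1..n-1}. crs (h x) (x i) = 0) \<or>
          (\<exists>i\<in>{1..n-1}. \<exists>j\<in>{1..n-1}. Dt y i j n \<noteq> 0 \<and> pair3 (crs (x i) (x j)) (h x) = 0)"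
          using m1 m2 m3 by fastforce
      next
        assume "h x = 0 \<or> (\<exists>i\<in>{1..n-1}. crs (h x) (x i) = 0) \<or>
          (\<exists>i\<in>{1..n-1}. \<exists>j\<in>{1..n-1}. Dt y i j n \<noteq> 0 \<and> pair3 (crs (x i) (x j)) (h x) = 0)"
        thus "G' \<in> \<Union>({VZ (n - 1) h} \<union> (\<lambda>i. VZ (n - 1) (\<lambda>x. crs (h x) (x i))) ` {1..n - 1} \<union>
          (\<lambda>(i, j). Zset (n - 1) {\<lambda>x. pair3 (crs (x i) (x j)) (h x)}) ` {(i, j). i \<in> {1..n - 1} \<and> j \<in> {1..n - 1} \<and> Dt y i j n \<noteq> 0})"
          using m1 m2 m3 by fastforce
      qed
    qed
    thus ?thesis by blast
  qed
  define Y where "Y = Y0 - Z"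
  have cov: "\<exists>k. x n = k *s h x" if G: "G \<in> X" and x: "rep n G x" for G x
  proof -
    have ix: "injt n x" "samet n x y" using X_props[OF G x] by auto
    have "Dt x a b n = 0" "Dt x c d n = 0" using samet_all[OF ix(2)] n1 ab cd by auto
    hence o: "pair3 (crs (x a) (x b)) (x n) = 0" "pair3 (crs (x c) (x d)) (x n) = 0" unfolding Dt_def by auto
    have "h x \<noteq> 0" using h0 injt_restr[OF ix(1)] samet_restr[OF ix(2)] by blast
    thus ?thesis using orth_crs[of "crs (x a) (x b)" "crs (x c) (x d)" "x n"] o unfolding h_def by blast
  qed
  have restrY: "\<forall>G\<in>X. G(n := undefined) \<in> Y"
  proof
    fix G assume G: "G \<in> X"
    have P: "G \<in> Pspace n" using G XP by blast
    obtain x where x: "rep n G x" using rep_exists P by blast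
    have ix: "injt n x" "samet n x y" using X_props[OF G x] by auto
    obtain k where k: "x n = k *s h x" using cov G x by blast
    have xn0: "x n \<noteq> 0" using x n1 unfolding rep_def by auto
    have k0: "k \<noteq> 0" using k xn0 by auto
    have hx0: "h x \<noteq> 0" using h0 injt_restr[OF ix(1)] samet_restr[OF ix(2)] by blast
    have c1: "\<forall>i\<in>{1..n-1}. crs (h x) (x i) \<noteq> 0"
    proof (intro ballI notI)
      fix i assume i: "i \<in> {1..n-1}" "crs (h x) (x i) = 0"
      hence "crs (x n) (x i) = 0" using k by simp
      thus False using ix(1) i n1 unfolding injt_def by auto
    qed
    have c2: "\<forall>i\<in>{1..n-1}. \<forall>j\<in>{1..n-1}. Dt y i j n \<noteq> 0 \<longrightarrow> pair3 (crs (x i) (x j)) (h x) \<noteq> 0"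
    proof (intro ballI impI notI)
      fix i j assume ij: "i \<in> {1..n-1}" "j \<in> {1..n-1}" "Dt y i j n \<noteq> 0" "pair3 (crs (x i) (x j)) (h x) = 0"
      hence "Dt x i j n = 0" unfolding Dt_def using k by simp
      hence "Dt y i j n = 0" using samet_all[OF ix(2)] ij n1 by auto
      thus False using ij by blast
    qed
    have "G(n := undefined) \<notin> Z"
      using notZ[OF Pspace_restr[OF n1 P] rep_restr[OF x]] hx0 c1 c2 by blast
    thus "G(n := undefined) \<in> Y" unfolding Y_def using X_restr[OF G] by blast
  qed
  have Yirr: "zirreducible (n - 1) Y"
  proof (rule zirred_open[OF irr Zc Y_def])
    show "Y \<noteq> {}" using restrY X_ne by blast
  qed
  show ?thesis
  proof (rule core[OF n1 Yirr _ XP X_ne restrY, where Q = "{h}"])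
    show "Y \<subseteq> Pspace (n - 1)" unfolding Y_def using Y0P by blast
    show "\<forall>q\<in>{h}. pv (n - 1) q \<and> mhv (n - 1) q" using pvh by blast
    show "\<forall>G\<in>X. \<forall>x. rep n G x \<longrightarrow> (\<exists>q\<in>{h}. \<exists>c. x n = c *s q x)" using cov by blast
    show "\<forall>G'\<in>Y. \<forall>x. rep (n - 1) G' x \<longrightarrow> (\<forall>f1 f2. f1 \<in> polyfun n \<and> multihom n f1 \<and> f2 \<in> polyfun n \<and> multihom n f2 \<longrightarrow>
        (\<forall>h'. h' \<noteq> 0 \<and> G'(n := proj_pt h') \<in> X \<longrightarrow> f1 (x(n := h')) * f2 (x(n := h')) = 0) \<longrightarrow>
        (\<forall>q\<in>{h}. f1 (x(n := q x)) = 0) \<or> (\<forall>q\<in>{h}. f2 (x(n := q x)) = 0))"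
    proof (intro ballI allI impI)
      fix G' x f1 f2
      assume G': "G' \<in> Y" and x: "rep (n - 1) G' x"
        and fs: "f1 \<in> polyfun n \<and> multihom n f1 \<and> f2 \<in> polyfun n \<and> multihom n f2"
        and van: "\<forall>h'. h' \<noteq> 0 \<and> G'(n := proj_pt h') \<in> X \<longrightarrow> f1 (x(n := h')) * f2 (x(n := h')) = 0"
      have G0: "G' \<in> Y0" "G' \<notin> Z" using G' unfolding Y_def by auto
      have P: "G' \<in> Pspace (n - 1)" using G0 Y0P by blast
      have nz: "h x \<noteq> 0" "\<forall>i\<in>{1..n-1}. crs (h x) (x i) \<noteq> 0"
        "\<forall>i\<in>{1..n-1}. \<forall>j\<in>{1..n-1}. Dt y i j n \<noteq> 0 \<longrightarrow> pair3 (crs (x i) (x j)) (h x) \<noteq> 0"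
        using notZ[OF P x] G0 by blast+
      have ix: "injt (n - 1) x" "samet (n - 1) x y" using Y0_props[OF G0(1) x] by auto
      have i2: "\<forall>i\<in>{1..n-1}. \<forall>j\<in>{1..n-1}. i \<noteq> j \<longrightarrow> (pair3 (crs (x i) (x j)) (h x) = 0 \<longleftrightarrow> Dt y i j n = 0)"
      proof (intro ballI impI)
        fix i j assume ij: "i \<in> {1..n-1}" "j \<in> {1..n-1}" "i \<noteq> j"
        show "pair3 (crs (x i) (x j)) (h x) = 0 \<longleftrightarrow> Dt y i j n = 0"
        proof
          assume "pair3 (crs (x i) (x j)) (h x) = 0" thus "Dt y i j n = 0" using nz(3) ij by blast
        next
          assume "Dt y i j n = 0"
          hence "crs (crs (x i) (x j)) (crs (x a) (x b)) = 0 \<or> crs (crs (x i) (x j)) (crs (x c) (x d)) = 0"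
            using E2[OF ij(1,2)] transfer_y[OF ix ij(1,2) ab(1-3)] transfer_y[OF ix ij(1,2) cd(1-3)] by blast
          thus "pair3 (crs (x i) (x j)) (h x) = 0"
          proof
            assume z: "crs (crs (x i) (x j)) (crs (x a) (x b)) = 0"
            have "crs (x a) (x b) \<noteq> 0" using ix(1) ab unfolding injt_def by auto
            moreover have "crs (crs (x a) (x b)) (crs (x i) (x j)) = 0" using z crs_anti[of "crs (x i) (x j)"] by simp
            ultimately obtain k where "crs (x i) (x j) = k *s crs (x a) (x b)" using crs_zero_prop by blast
            thus ?thesis unfolding h_def by simp
          next
            assume z: "crs (crs (x i) (x j)) (crs (x c) (x d)) = 0"
            have "crs (x c) (x d) \<noteq> 0" using ix(1) cd unfolding injt_def by auto
            moreover have "crs (crs (x c) (x d)) (crs (x i) (x j)) = 0" using z crs_anti[of "crs (x i) (x j)"] by simp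
            ultimately obtain k where "crs (x i) (x j) = k *s crs (x c) (x d)" using crs_zero_prop by blast
            thus ?thesis unfolding h_def by simp
          qed
        qed
      qed
      have "G'(n := proj_pt (h x)) \<in> X" using X_ext[OF G0(1) x nz(1) nz(2) i2] .
      hence "f1 (x(n := h x)) * f2 (x(n := h x)) = 0" using van nz(1) by blast
      thus "(\<forall>q\<in>{h}. f1 (x(n := q x)) = 0) \<or> (\<forall>q\<in>{h}. f2 (x(n := q x)) = 0)" by simp
    qed
  qed
qed

end


theorem lemma1:
  fixes n :: nat and H :: "nat \<Rightarrow> (complex^3) set"
  assumes "1 \<le> n"
    and "\<forall>i\<in>{1..n}. H i \<in> P2"
    and "inj_on H {1..n}"
    and "finite {p \<in> mult_pts n H. on_line p (H n)}"
    and "card {p \<in> mult_pts n H. on_line p (H n)} \<le> 2"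
    and "zirreducible (n - 1) (realization (n - 1) (incidence (n - 1) H))"
  shows "zirreducible n (realization n (incidence n H))"
proof -
  obtain y where y: "\<forall>i\<in>{1..n}. y i \<noteq> 0 \<and> H i = proj_pt (y i)" using rep_H[OF assms(2)] by blast
  have "injt n y" unfolding injt_def
  proof (intro ballI impI)
    fix i j assume ij: "i \<in> {1..n}" "j \<in> {1..n}" "i \<noteq> j"
    hence "H i \<noteq> H j" using assms(3) unfolding inj_on_def by blast
    thus "crs (y i) (y j) \<noteq> 0" using y ij proj_eq_iff by metis
  qed
  then interpret arr n H y using assms(1) y by unfold_locales auto
  consider "card M = 0" | "card M = 1" | "card M = 2" using assms(5) by linarith
  thus ?thesis
  proof cases
    case 1 hence "M = {}" by (rule card_0_eq[OF assms(4), THEN iffD1])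
    thus ?thesis by (rule case0[OF _ assms(6)])
  next
    case 2 then obtain p where "M = {p}" using card_1_singleton_iff[THEN iffD1, OF 2[unfolded One_nat_def]] by (elim exE)
    thus ?thesis by (rule case1[OF _ assms(6)])
  next
    case 3 then obtain p q where "M = {p, q}" "p \<noteq> q" using card_2_iff[THEN iffD1, OF 3] by (elim exE conjE)
    thus ?thesis by (rule case2[OF _ _ assms(6)])
  qed
qed


end
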